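(* Let $T,S\in\mathcal M_n(\mathbb C)$. Then for every $p>0$ and all $t\in[0,1]$, $$\|T+S\|_p\le\big\||T^*|^{2t}+|S^*|^{2t}\big\|^{1/2}\big\||T|^{2(1-t)}+|S|^{2(1-t)}\big\|_{p/2}^{1/2}$$ and $$\|T+S\|_p\le\big\||T^*|^{2t}+|S^*|^{2(1-t)}\big\|^{1/2}\big\||T|^{2(1-t)}+|S|^{2t}\big\|_{p/2}^{1/2}.$$
   Context: $|T|=(T^*T)^{1/2}$, $|T^*|=(TT^* )^{1/2}$, powers via functional calculus with $|T|^0=I$. Singular values $s_1(T)\ge\dots\ge s_n(T)$ are the eigenvalues of $|T|$; $\|T\|=s_1(T)$; for $p>0$, $\|T\|_p=(\sum_j s_j^p(T))^{1/p}$. *)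

theory Defs
  imports "Jordan_Normal_Form.Schur_Decomposition"
begin

definition unitary_mat :: "nat \<Rightarrow> complex mat \<Rightarrow> bool" where
  "unitary_mat n U \<longleftrightarrow> U \<in> carrier_mat n n \<and> U * mat_adjoint U = 1\<^sub>m n \<and> mat_adjoint U * U = 1\<^sub>m n"

definition rdiag :: "real list \<Rightarrow> complex mat" where
  "rdiag d = mat (length d) (length d) (\<lambda>(i,j). if i = j then complex_of_real (d ! i) else 0)"

definition psd_spec :: "complex mat \<Rightarrow> complex mat \<times> real list \<Rightarrow> bool" where
  "psd_spec A ud \<longleftrightarrow> (let n = dim_row A; U = fst ud; d = snd ud in
      unitary_mat n U \<and> length d = n \<and> (\<forall>i<n. d ! i \<ge> 0) \<and>
      A = U * rdiag d * mat_adjoint U)"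

definition psd_decomp :: "complex mat \<Rightarrow> complex mat \<times> real list" where
  "psd_decomp A = (SOME ud. psd_spec A ud)"

(* real power of a nonnegative number, with the convention x^0 = 1 (so that |T|^0 = I) *)
definition rpow :: "real \<Rightarrow> real \<Rightarrow> real" where
  "rpow x r = (if r = 0 then 1 else x powr r)"

definition psd_pow :: "complex mat \<Rightarrow> real \<Rightarrow> complex mat" where
  "psd_pow A r = (let (U, d) = psd_decomp A in U * rdiag (map (\<lambda>x. rpow x r) d) * mat_adjoint U)"

definition psd_eigenvalues :: "complex mat \<Rightarrow> real list" where
  "psd_eigenvalues A = snd (psd_decomp A)"

definition mat_abs :: "complex mat \<Rightarrow> complex mat" where
  "mat_abs T = psd_pow (mat_adjoint T * T) (1/2)"

definition singular_values :: "complex mat \<Rightarrow> real list" where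
  "singular_values T = rev (sort (psd_eigenvalues (mat_abs T)))"

definition op_norm :: "complex mat \<Rightarrow> real" where
  "op_norm T = hd (singular_values T)"

definition schatten_norm :: "real \<Rightarrow> complex mat \<Rightarrow> real" where
  "schatten_norm p T = (\<Sum>s\<leftarrow>singular_values T. s powr p) powr (1/p)"

end

theory Submission
  imports Defs
begin

lemma adj_dims[simp]: "dim_row (mat_adjoint A) = dim_col A" "dim_col (mat_adjoint A) = dim_row A"
  unfolding mat_adjoint_def mat_of_rows_def by simp_all

lemma adj_carrier[simp]: "A \<in> carrier_mat n m \<Longrightarrow> mat_adjoint A \<in> carrier_mat m n"
  unfolding carrier_mat_def by simp

lemma adj_index[simp]: "i < dim_col A \<Longrightarrow> j < dim_row A \<Longrightarrow> mat_adjoint (A::complex mat) $$ (i,j) = cnj (A $$ (j,i))"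
  unfolding mat_adjoint_def by (simp add: mat_of_rows_def)

lemma adj_adj[simp]: "mat_adjoint (mat_adjoint (A::complex mat)) = A"
  by (rule eq_matI) simp_all

lemma adj_mult: assumes "A \<in> carrier_mat n m" "B \<in> carrier_mat m k"
  shows "mat_adjoint (A * B) = mat_adjoint B * mat_adjoint (A::complex mat)"
proof (rule eq_matI)
  fix i j assume "i < dim_row (mat_adjoint B * mat_adjoint A)" "j < dim_col (mat_adjoint B * mat_adjoint A)"
  hence ij: "i < k" "j < n" using assms by simp_all
  show "mat_adjoint (A * B) $$ (i, j) = (mat_adjoint B * mat_adjoint A) $$ (i, j)"
    using assms ij by (simp add: scalar_prod_def mult.commute cnj_sum)
qed (use assms in simp_all)

lemma adj_add: assumes "A \<in> carrier_mat n m" "B \<in> carrier_mat n m"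
  shows "mat_adjoint (A + B) = mat_adjoint B + mat_adjoint (A::complex mat)"
  by (rule eq_matI) (use assms in simp_all)

lemma adj_one[simp]: "mat_adjoint (1\<^sub>m n :: complex mat) = 1\<^sub>m n"
  by (rule eq_matI) simp_all

lemma rdiag_carrier[simp]: "rdiag d \<in> carrier_mat (length d) (length d)"
  and rdiag_dims[simp]: "dim_row (rdiag d) = length d" "dim_col (rdiag d) = length d"
  unfolding rdiag_def by simp_all

lemma rdiag_index[simp]: "i < length d \<Longrightarrow> j < length d \<Longrightarrow> rdiag d $$ (i,j) = (if i = j then complex_of_real (d!i) else 0)"
  unfolding rdiag_def by simp

lemma adj_rdiag[simp]: "mat_adjoint (rdiag d) = rdiag d"
  by (rule eq_matI) simp_all

lemma sum_single_nz: assumes "finite A" "j \<in> A" "\<And>i. i \<in> A \<Longrightarrow> i \<noteq> j \<Longrightarrow> f i = 0" shows "sum f A = f j"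
proof -
  have "sum f A = f j + sum f (A - {j})" using assms(1,2) by (rule sum.remove)
  also have "sum f (A - {j}) = 0" by (rule sum.neutral) (use assms(3) in blast)
  finally show ?thesis by simp
qed

lemma mult_rdiag_index[simp]: assumes "A \<in> carrier_mat n (length d)" "i < n" "j < length d"
  shows "(A * rdiag d) $$ (i,j) = A $$ (i,j) * d!j"
proof -
  have "(A * rdiag d) $$ (i,j) = (\<Sum>k\<in>{0..<length d}. A $$ (i,k) * rdiag d $$ (k,j))"
    using assms by (simp add: scalar_prod_def)
  also have "\<dots> = A $$ (i,j) * rdiag d $$ (j,j)"
    by (rule sum_single_nz) (use assms in simp_all)
  finally show ?thesis using assms by simp
qed

lemma rdiag_mult_index[simp]: assumes "A \<in> carrier_mat (length d) n" "i < length d" "j < n"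
  shows "(rdiag d * A) $$ (i,j) = d!i * A $$ (i,j)"
proof -
  have "(rdiag d * A) $$ (i,j) = (\<Sum>k\<in>{0..<length d}. rdiag d $$ (i,k) * A $$ (k,j))"
    using assms by (simp add: scalar_prod_def)
  also have "\<dots> = rdiag d $$ (i,i) * A $$ (i,j)"
    by (rule sum_single_nz) (use assms in simp_all)
  finally show ?thesis using assms by simp
qed

lemma rdiag_mult_rdiag: "rdiag (map f d) * rdiag (map g d) = rdiag (map (\<lambda>x. f x * g x) d)"
proof (rule eq_matI)
  fix i j assume "i < dim_row (rdiag (map (\<lambda>x. f x * g x) d))" "j < dim_col (rdiag (map (\<lambda>x. f x * g x) d))"
  hence "i < length d" "j < length d" by auto
  thus "(rdiag (map f d) * rdiag (map g d)) $$ (i, j) = rdiag (map (\<lambda>x. f x * g x) d) $$ (i, j)"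
    by (subst rdiag_mult_index[where n="length d"]) auto
qed auto

lemma rdiag_mult_vec[simp]: assumes "x \<in> carrier_vec (length d)" "i < length d"
  shows "(rdiag d *\<^sub>v x) $ i = d!i * x$i"
proof -
  have "(rdiag d *\<^sub>v x) $ i = (\<Sum>k\<in>{0..<length d}. rdiag d $$ (i,k) * x $ k)"
    using assms by (simp add: scalar_prod_def)
  also have "\<dots> = rdiag d $$ (i,i) * x $ i"
    by (rule sum_single_nz) (use assms in simp_all)
  finally show ?thesis using assms by simp
qed

definition ip :: "complex vec \<Rightarrow> complex vec \<Rightarrow> complex" where
  "ip x y = (\<Sum>i<dim_vec x. cnj (x$i) * y$i)"

lemma row_sp_sum: "A \<in> carrier_mat n m \<Longrightarrow> x \<in> carrier_vec m \<Longrightarrow> i < n \<Longrightarrow>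
  row A i \<bullet> x = (\<Sum>j<m. A $$ (i,j) * x $ j)"
  by (auto simp: scalar_prod_def atLeast0LessThan)
lemma mult_mat_vec_sum: "A \<in> carrier_mat n m \<Longrightarrow> x \<in> carrier_vec m \<Longrightarrow> i < n \<Longrightarrow>
  (A *\<^sub>v x) $ i = (\<Sum>j<m. A $$ (i,j) * x $ j)"
  by (auto simp: scalar_prod_def atLeast0LessThan)

lemma ip_adj: assumes A: "A \<in> carrier_mat n m" and x: "x \<in> carrier_vec n" and y: "y \<in> carrier_vec m"
  shows "ip x (A *\<^sub>v y) = ip (mat_adjoint A *\<^sub>v x) y"
proof -
  have "ip x (A *\<^sub>v y) = (\<Sum>i<n. cnj (x$i) * (\<Sum>j<m. A $$ (i,j) * y $ j))"
    unfolding ip_def using assms by (simp add: row_sp_sum)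
  also have "\<dots> = (\<Sum>i<n. \<Sum>j<m. cnj (x$i) * A $$ (i,j) * y $ j)"
    by (simp add: sum_distrib_left mult.assoc)
  also have "\<dots> = (\<Sum>j<m. \<Sum>i<n. cnj (x$i) * A $$ (i,j) * y $ j)"
    by (rule sum.swap)
  also have "\<dots> = (\<Sum>j<m. cnj (\<Sum>i<n. cnj (A $$ (i,j)) * x $ i) * y $ j)"
    by (auto simp: sum_distrib_right sum_distrib_left mult_ac intro!: sum.cong)
  also have "\<dots> = ip (mat_adjoint A *\<^sub>v x) y"
    unfolding ip_def using assms by (simp add: row_sp_sum[of "mat_adjoint A" m n])
  finally show ?thesis .
qed

lemma ip_cnj: "dim_vec x = dim_vec y \<Longrightarrow> cnj (ip x y) = ip y x"
  unfolding ip_def by (simp add: mult.commute)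

lemma ip_add_right: "x \<in> carrier_vec n \<Longrightarrow> y \<in> carrier_vec n \<Longrightarrow> z \<in> carrier_vec n \<Longrightarrow> ip x (y + z) = ip x y + ip x z"
  unfolding ip_def by (auto simp: distrib_left sum.distrib)
lemma ip_add_left: "x \<in> carrier_vec n \<Longrightarrow> y \<in> carrier_vec n \<Longrightarrow> z \<in> carrier_vec n \<Longrightarrow> ip (x + y) z = ip x z + ip y z"
  unfolding ip_def by (auto simp: distrib_right sum.distrib)
lemma ip_minus_right: "x \<in> carrier_vec n \<Longrightarrow> y \<in> carrier_vec n \<Longrightarrow> z \<in> carrier_vec n \<Longrightarrow> ip x (y - z) = ip x y - ip x z"
  unfolding ip_def by (auto simp: right_diff_distrib sum_subtractf)
lemma ip_minus_left: "x \<in> carrier_vec n \<Longrightarrow> y \<in> carrier_vec n \<Longrightarrow> z \<in> carrier_vec n \<Longrightarrow> ip (x - y) z = ip x z - ip y z"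
  unfolding ip_def by (auto simp: left_diff_distrib sum_subtractf)
lemma ip_smult_right: "ip x (c \<cdot>\<^sub>v y) = c * ip x y" if "dim_vec y = dim_vec x"
  using that unfolding ip_def by (auto simp: sum_distrib_left mult_ac)
lemma ip_smult_left: "ip (c \<cdot>\<^sub>v x) y = cnj c * ip x y" if "dim_vec y = dim_vec x"
  using that unfolding ip_def by (auto simp: sum_distrib_left mult_ac)

lemma cnj_mult_self: "cnj z * z = complex_of_real ((cmod z)^2)"
  by (metis complex_norm_square mult.commute)
lemma ip_self: "ip x x = complex_of_real (\<Sum>i<dim_vec x. (cmod (x$i))^2)"
  unfolding ip_def cnj_mult_self of_real_sum ..

lemma ip_self_ge0: "Re (ip x x) \<ge> 0" and ip_self_Im: "Im (ip x x) = 0"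
  by (auto simp: ip_self intro: sum_nonneg)

lemma ip_self_zero: assumes "x \<in> carrier_vec n" "ip x x = 0" shows "x = 0\<^sub>v n"
proof -
  have "(\<Sum>i<n. (cmod (x$i))^2) = 0" using assms(2) unfolding ip_self using assms(1) by (simp only: of_real_eq_0_iff carrier_vecD)
  hence "\<forall>i\<in>{..<n}. (cmod (x$i))^2 = 0" by (subst (asm) sum_nonneg_eq_0_iff, auto)
  thus ?thesis using assms by (auto intro!: eq_vecI)
qed

lemma ip_zero_left[simp]: "ip (0\<^sub>v n) y = 0" unfolding ip_def by simp

lemma ip_mat: assumes "X \<in> carrier_mat n k" "A \<in> carrier_mat n n" "Y \<in> carrier_mat n l" "i < k" "j < l"
  shows "(mat_adjoint X * A * Y) $$ (i,j) = ip (col X i) (A *\<^sub>v col Y j)"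
proof -
  have "(mat_adjoint X * A * Y) $$ (i,j) = (mat_adjoint X * (A * Y)) $$ (i,j)"
    using assms by (subst assoc_mult_mat, auto)
  also have "\<dots> = (\<Sum>p<n. cnj (X $$ (p,i)) * (A * Y) $$ (p,j))"
    using assms by (auto simp: scalar_prod_def atLeast0LessThan intro: sum.cong)
  also have "\<dots> = ip (col X i) (A *\<^sub>v col Y j)"
    unfolding ip_def using assms by (auto simp: scalar_prod_def atLeast0LessThan intro!: sum.cong)
  finally show ?thesis .
qed

definition hermitian :: "complex mat \<Rightarrow> bool" where "hermitian A \<longleftrightarrow> mat_adjoint A = A"

lemma unitary_carrier: "unitary_mat n U \<Longrightarrow> U \<in> carrier_mat n n"
  by (simp add: unitary_mat_def)

lemma unitaryD: assumes "unitary_mat n U"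
  shows "U \<in> carrier_mat n n" "U * mat_adjoint U = 1\<^sub>m n" "mat_adjoint U * U = 1\<^sub>m n"
  using assms unfolding unitary_mat_def by auto

lemma unitary_adj: "unitary_mat n U \<Longrightarrow> unitary_mat n (mat_adjoint U)"
  by (auto simp: unitary_mat_def)

lemma unitary_ip: assumes U: "unitary_mat n U" and x: "x \<in> carrier_vec n" and y: "y \<in> carrier_vec n"
  shows "ip (U *\<^sub>v x) (U *\<^sub>v y) = ip x y"
proof -
  have Uc: "U \<in> carrier_mat n n" using U by (simp add: unitary_mat_def)
  have "ip (U *\<^sub>v x) (U *\<^sub>v y) = ip (mat_adjoint U *\<^sub>v (U *\<^sub>v x)) y"
    using Uc x y by (subst ip_adj[symmetric, of _ n n], auto)
  also have "mat_adjoint U *\<^sub>v (U *\<^sub>v x) = (mat_adjoint U * U) *\<^sub>v x"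
    using Uc x by (subst assoc_mult_mat_vec, auto)
  also have "\<dots> = x" using unitaryD(3)[OF U] x by simp
  finally show ?thesis .
qed

lemma mult_carrier_nn[simp]: "A \<in> carrier_mat n n \<Longrightarrow> B \<in> carrier_mat n n \<Longrightarrow> A * B \<in> carrier_mat n n"
  by auto
lemma mult_assoc_nn: "A \<in> carrier_mat n n \<Longrightarrow> B \<in> carrier_mat n n \<Longrightarrow> C \<in> carrier_mat n n \<Longrightarrow> A * B * C = A * (B * (C::complex mat))"
  by (rule assoc_mult_mat)

lemma unitary_mult: assumes "unitary_mat n U" "unitary_mat n V" shows "unitary_mat n (U * V)"
proof -
  have U: "U \<in> carrier_mat n n" and V: "V \<in> carrier_mat n n" using assms by (auto simp: unitary_mat_def)
  have aU: "mat_adjoint U \<in> carrier_mat n n" and aV: "mat_adjoint V \<in> carrier_mat n n" using U V by auto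
  have "U * V * mat_adjoint (U * V) = U * (V * mat_adjoint V) * mat_adjoint U"
    using U V aU aV by (simp add: adj_mult[OF U V] mult_assoc_nn[of _ n])
  also have "\<dots> = 1\<^sub>m n" using unitaryD[OF assms(1)] unitaryD[OF assms(2)] U V by simp
  finally have 1: "U * V * mat_adjoint (U * V) = 1\<^sub>m n" .
  have "mat_adjoint (U * V) * (U * V) = mat_adjoint V * (mat_adjoint U * U) * V"
    using U V aU aV by (simp add: adj_mult[OF U V] mult_assoc_nn[of _ n])
  also have "\<dots> = 1\<^sub>m n" using unitaryD[OF assms(1)] unitaryD[OF assms(2)] U V by simp
  finally have 2: "mat_adjoint (U * V) * (U * V) = 1\<^sub>m n" .
  have "U * V \<in> carrier_mat n n" using U V by simp
  with 1 2 show ?thesis unfolding unitary_mat_def by blast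
qed

definition ext1 :: "nat \<Rightarrow> complex \<Rightarrow> complex mat \<Rightarrow> complex mat" where
  "ext1 n c X = mat (Suc n) (Suc n) (\<lambda>(i,j). if i = 0 \<and> j = 0 then c else if i = 0 \<or> j = 0 then 0 else X $$ (i - 1, j - 1))"

lemma ext1_carrier[simp]: "ext1 n c X \<in> carrier_mat (Suc n) (Suc n)"
  and ext1_dims[simp]: "dim_row (ext1 n c X) = Suc n" "dim_col (ext1 n c X) = Suc n"
  unfolding ext1_def by simp_all

lemma ext1_index: "i < Suc n \<Longrightarrow> j < Suc n \<Longrightarrow> ext1 n c X $$ (i,j) =
   (if i = 0 \<and> j = 0 then c else if i = 0 \<or> j = 0 then 0 else X $$ (i - 1, j - 1))"
  unfolding ext1_def by simp

lemma ext1_00[simp]: "ext1 n c X $$ (0,0) = c"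
  and ext1_0S[simp]: "j < n \<Longrightarrow> ext1 n c X $$ (0,Suc j) = 0"
  and ext1_S0[simp]: "i < n \<Longrightarrow> ext1 n c X $$ (Suc i,0) = 0"
  and ext1_SS[simp]: "i < n \<Longrightarrow> j < n \<Longrightarrow> ext1 n c X $$ (Suc i,Suc j) = X $$ (i,j)"
  by (simp_all add: ext1_index)

lemma sum_Suc_split: "(\<Sum>k\<in>{0..<Suc n}. f k) = f 0 + (\<Sum>k<n. f (Suc k))"
  by (simp only: atLeast0LessThan sum.lessThan_Suc_shift)

lemma mat_eq_SucI: assumes "A \<in> carrier_mat (Suc n) (Suc n)" "B \<in> carrier_mat (Suc n) (Suc n)"
  and "A $$ (0,0) = B $$ (0,0)" "\<And>j. j < n \<Longrightarrow> A $$ (0,Suc j) = B $$ (0,Suc j)"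
  "\<And>i. i < n \<Longrightarrow> A $$ (Suc i,0) = B $$ (Suc i,0)"
  "\<And>i j. i < n \<Longrightarrow> j < n \<Longrightarrow> A $$ (Suc i,Suc j) = B $$ (Suc i,Suc j)"
shows "A = B"
proof (rule eq_matI)
  fix i j assume "i < dim_row B" "j < dim_col B"
  hence ij: "i < Suc n" "j < Suc n" using assms(2) by simp_all
  show "A $$ (i, j) = B $$ (i, j)"
  proof (cases i)
    case 0 thus ?thesis using ij assms(3,4) by (cases j) simp_all
  next
    case (Suc i') thus ?thesis using ij assms(5,6) by (cases j) simp_all
  qed
qed (use assms in simp_all)

lemma ext1_mult: assumes X: "X \<in> carrier_mat n n" and Y: "Y \<in> carrier_mat n n"
  shows "ext1 n a X * ext1 n b Y = ext1 n (a * b) (X * Y)"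
proof (rule mat_eq_SucI[of _ n])
  show "ext1 n a X * ext1 n b Y \<in> carrier_mat (Suc n) (Suc n)" by simp
  show "ext1 n (a * b) (X * Y) \<in> carrier_mat (Suc n) (Suc n)" by simp
  show "(ext1 n a X * ext1 n b Y) $$ (0, 0) = ext1 n (a * b) (X * Y) $$ (0, 0)"
    by (simp del: sum.op_ivl_Suc add: scalar_prod_def sum_Suc_split)
  show "(ext1 n a X * ext1 n b Y) $$ (0, Suc j) = ext1 n (a * b) (X * Y) $$ (0, Suc j)" if "j < n" for j
    using that by (simp del: sum.op_ivl_Suc add: scalar_prod_def sum_Suc_split)
  show "(ext1 n a X * ext1 n b Y) $$ (Suc i, 0) = ext1 n (a * b) (X * Y) $$ (Suc i, 0)" if "i < n" for i
    using that by (simp del: sum.op_ivl_Suc add: scalar_prod_def sum_Suc_split)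
  show "(ext1 n a X * ext1 n b Y) $$ (Suc i, Suc j) = ext1 n (a * b) (X * Y) $$ (Suc i, Suc j)"
    if "i < n" "j < n" for i j
    using that X Y by (simp del: sum.op_ivl_Suc sum.lessThan_Suc add: scalar_prod_def atLeast0LessThan sum.lessThan_Suc_shift)
qed

lemma ext1_adj: assumes X: "X \<in> carrier_mat n n"
  shows "mat_adjoint (ext1 n a X) = ext1 n (cnj a) (mat_adjoint X)"
  by (rule mat_eq_SucI[of _ n]) (use X in simp_all)

lemma ext1_one: "ext1 n 1 (1\<^sub>m n) = 1\<^sub>m (Suc n)"
  by (rule mat_eq_SucI[of _ n]) simp_all

lemma ext1_rdiag: assumes "length d = n"
  shows "ext1 n (complex_of_real r) (rdiag d) = rdiag (r # d)"
  by (rule mat_eq_SucI[of _ n]) (use assms rdiag_carrier[of "r#d"] in simp_all)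

lemma ext1_unitary: assumes U: "unitary_mat n U" shows "unitary_mat (Suc n) (ext1 n 1 U)"
proof -
  note UD = unitaryD[OF U]
  have aU: "mat_adjoint U \<in> carrier_mat n n" using UD by simp
  have 1: "ext1 n 1 U * mat_adjoint (ext1 n 1 U) = 1\<^sub>m (Suc n)"
    by (simp add: ext1_adj[OF UD(1)] ext1_mult[OF UD(1) aU] UD(2) ext1_one)
  have 2: "mat_adjoint (ext1 n 1 U) * ext1 n 1 U = 1\<^sub>m (Suc n)"
    by (simp add: ext1_adj[OF UD(1)] ext1_mult[OF aU UD(1)] UD(3) ext1_one)
  show ?thesis unfolding unitary_mat_def using 1 2 by simp
qed

lemma adj_mult_index: assumes "X \<in> carrier_mat n k" "Y \<in> carrier_mat n l" "i < k" "j < l"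
  shows "(mat_adjoint X * Y) $$ (i,j) = ip (col X i) (col Y j)"
  unfolding ip_def using assms by (simp add: scalar_prod_def atLeast0LessThan)

lemma ip_conj_scalar: "dim_vec v = dim_vec w \<Longrightarrow> v \<bullet>c w = ip w v"
  unfolding ip_def by (simp add: scalar_prod_def atLeast0LessThan mult.commute)

definition nrm :: "complex vec \<Rightarrow> complex vec" where
  "nrm v = (1 / complex_of_real (sqrt (Re (ip v v)))) \<cdot>\<^sub>v v"

lemma ip_real: "ip v v = complex_of_real (Re (ip v v))"
  by (simp add: complex_eq_iff ip_self_Im)

lemma nrm_carrier[simp]: "(nrm v \<in> carrier_vec n) = (v \<in> carrier_vec n)"
  unfolding nrm_def by simp

lemma nrm_dim[simp]: "dim_vec (nrm v) = dim_vec v"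
  unfolding nrm_def by simp

lemma ip_nrm: "ip (nrm v) (nrm w) = ip v w / complex_of_real (sqrt (Re (ip v v)) * sqrt (Re (ip w w)))"
  if "dim_vec v = dim_vec w"
  using that unfolding nrm_def by (simp add: ip_smult_left ip_smult_right)

lemma ip_nrm_self: assumes "ip v v \<noteq> 0" shows "ip (nrm v) (nrm v) = 1"
proof -
  have r: "Re (ip v v) > 0" using assms ip_self_ge0[of v] ip_real[of v]
    by (metis less_eq_real_def of_real_0)
  have "ip (nrm v) (nrm v) = ip v v / complex_of_real (sqrt (Re (ip v v)) * sqrt (Re (ip v v)))"
    by (rule ip_nrm) simp
  also have "sqrt (Re (ip v v)) * sqrt (Re (ip v v)) = Re (ip v v)" using r by simp
  also have "ip v v / complex_of_real (Re (ip v v)) = 1" using r by (subst ip_real, simp)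
  finally show ?thesis .
qed

lemma nrm_unit: assumes "ip v v = 1" shows "nrm v = v"
  unfolding nrm_def assms by simp

lemma eig_exists: assumes A: "(A :: complex mat) \<in> carrier_mat n n" and n: "n > 0"
  shows "\<exists>l v. v \<in> carrier_vec n \<and> v \<noteq> 0\<^sub>v n \<and> A *\<^sub>v v = l \<cdot>\<^sub>v v"
proof -
  obtain as where cp: "char_poly A = (\<Prod>a\<leftarrow>as. [:- a, 1:])" and len: "length as = n"
    using char_poly_factorized[OF A] by blast
  then obtain l rest where as: "as = l # rest" using n by (cases as) auto
  have "poly (char_poly A) l = 0" unfolding cp as by simp
  hence "eigenvalue A l" using eigenvalue_root_char_poly[OF A] by simp
  then obtain v where "eigenvector A v l" unfolding eigenvalue_def by blast
  thus ?thesis unfolding eigenvector_def using A by auto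
qed

lemma hermitian_entry: "hermitian B \<Longrightarrow> i < dim_row B \<Longrightarrow> j < dim_col B \<Longrightarrow> B $$ (i,j) = cnj (B $$ (j,i))"
  unfolding hermitian_def by (metis adj_dims adj_index)

theorem spectral:
  assumes "A \<in> carrier_mat n n" "hermitian A"
  shows "\<exists>U d. unitary_mat n U \<and> length d = n \<and> A = U * rdiag d * mat_adjoint U"
  using assms
proof (induction n arbitrary: A)
  case 0
  have "unitary_mat 0 (1\<^sub>m 0)" unfolding unitary_mat_def by simp
  moreover have "A = 1\<^sub>m 0 * rdiag [] * mat_adjoint (1\<^sub>m 0)"
    by (rule eq_matI) (use 0 in simp_all)
  ultimately show ?case by (intro exI[of _ "1\<^sub>m 0"] exI[of _ "[]"]) simp
next
  case (Suc m A)
  note A = Suc.prems(1) and hA = Suc.prems(2)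
  obtain l v where v: "v \<in> carrier_vec (Suc m)" "v \<noteq> 0\<^sub>v (Suc m)" and Av: "A *\<^sub>v v = l \<cdot>\<^sub>v v"
    using eig_exists[OF A] by blast
  define v0 where "v0 = nrm v"
  have ipv: "ip v v \<noteq> 0" using ip_self_zero[OF v(1)] v(2) by blast
  have v0: "v0 \<in> carrier_vec (Suc m)" using v unfolding v0_def by simp
  have v01: "ip v0 v0 = 1" unfolding v0_def by (rule ip_nrm_self[OF ipv])
  have v0nz: "v0 \<noteq> 0\<^sub>v (Suc m)" using v01 by auto
  have Av0: "A *\<^sub>v v0 = l \<cdot>\<^sub>v v0"
    unfolding v0_def nrm_def using A v Av by (simp add: mult_mat_vec smult_smult_assoc mult.commute)
  interpret cof_vec_space "Suc m" "TYPE(complex)" .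
  define b where "b = basis_completion v0"
  note bc = basis_completion[OF v0 v0nz, folded b_def]
  define ws where "ws = gram_schmidt (Suc m) b"
  note gs = gram_schmidt_result[OF bc(2) bc(4) bc(5) ws_def]
  have lenws: "length ws = Suc m" using gs(4) bc(6) by simp
  have bcons: "b = v0 # tl b" unfolding b_def basis_completion_def Let_def by simp
  have hdws: "hd ws = v0" unfolding ws_def by (subst bcons) (rule gram_schmidt_hd[OF v0])
  have ws0: "ws ! 0 = v0" using hdws lenws by (cases ws) auto
  have wsc: "\<And>i. i < Suc m \<Longrightarrow> ws ! i \<in> carrier_vec (Suc m)" using gs(3) lenws by auto
  define us where "us = map nrm ws"
  have lenus: "length us = Suc m" unfolding us_def using lenws by simp
  have usc: "\<And>i. i < Suc m \<Longrightarrow> us ! i \<in> carrier_vec (Suc m)" unfolding us_def using wsc lenws by simp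
  have us0: "us ! 0 = v0" unfolding us_def using ws0 lenws nrm_unit[OF v01] by simp
  have usorth: "ip (us ! i) (us ! j) = (if i = j then 1 else 0)" if ij: "i < Suc m" "j < Suc m" for i j
  proof (cases "i = j")
    case True
    have "ws ! i \<bullet>c ws ! i \<noteq> 0" using corthogonalD[OF gs(2), of i i] ij lenws by simp
    hence "ip (ws ! i) (ws ! i) \<noteq> 0" using ip_conj_scalar[of "ws ! i" "ws ! i"] by simp
    thus ?thesis using True ij lenws unfolding us_def by (simp add: ip_nrm_self)
  next
    case False
    have "ws ! j \<bullet>c ws ! i = 0" using corthogonalD[OF gs(2), of j i] ij lenws False by simp
    hence "ip (ws ! i) (ws ! j) = 0" using ip_conj_scalar[of "ws ! j" "ws ! i"] wsc[OF ij(1)] wsc[OF ij(2)] by simp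
    thus ?thesis using False ij lenws wsc[OF ij(1)] wsc[OF ij(2)] unfolding us_def by (simp add: ip_nrm)
  qed
  define W where "W = mat_of_cols (Suc m) us"
  have W: "W \<in> carrier_mat (Suc m) (Suc m)" unfolding W_def using lenus mat_of_cols_carrier(1)[of "Suc m" us] by simp
  have colW: "\<And>i. i < Suc m \<Longrightarrow> col W i = us ! i" unfolding W_def using lenus usc by simp
  have aW: "mat_adjoint W \<in> carrier_mat (Suc m) (Suc m)" using W by simp
  have WW1: "mat_adjoint W * W = 1\<^sub>m (Suc m)"
  proof (rule eq_matI)
    fix i j assume "i < dim_row (1\<^sub>m (Suc m))" "j < dim_col (1\<^sub>m (Suc m) :: complex mat)"
    hence ij: "i < Suc m" "j < Suc m" by simp_all
    show "(mat_adjoint W * W) $$ (i, j) = 1\<^sub>m (Suc m) $$ (i, j)"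
      using adj_mult_index[OF W W ij] colW ij usorth[OF ij] by simp
  qed (use W in simp_all)
  have WW2: "W * mat_adjoint W = 1\<^sub>m (Suc m)" by (rule mat_mult_left_right_inverse[OF aW W WW1])
  have uW: "unitary_mat (Suc m) W" unfolding unitary_mat_def using W WW1 WW2 by simp
  define B where "B = mat_adjoint W * A * W"
  have Bc: "B \<in> carrier_mat (Suc m) (Suc m)" unfolding B_def using W A by simp
  have Bij: "B $$ (i,j) = ip (us ! i) (A *\<^sub>v (us ! j))" if "i < Suc m" "j < Suc m" for i j
    unfolding B_def using ip_mat[OF W A W that] colW that by simp
  have hB: "hermitian B"
  proof -
    have "mat_adjoint B = mat_adjoint W * (mat_adjoint (mat_adjoint W * A))"
      unfolding B_def by (rule adj_mult[of _ "Suc m" "Suc m"]) (use W A in simp_all)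
    also have "mat_adjoint (mat_adjoint W * A) = mat_adjoint A * W"
      by (subst adj_mult[of _ "Suc m" "Suc m"]) (use W A in simp_all)
    also have "mat_adjoint A = A" using hA unfolding hermitian_def by simp
    finally show ?thesis unfolding hermitian_def B_def using W A aW by (simp add: mult_assoc_nn[of _ "Suc m"])
  qed
  have Bi0: "B $$ (i,0) = (if i = 0 then l else 0)" if "i < Suc m" for i
    using Bij[OF that, of 0] us0 Av0 v0 usc[OF that] usorth[OF that, of 0]
    by (simp add: ip_smult_right)
  have B0j: "B $$ (0,j) = (if j = 0 then cnj l else 0)" if "j < Suc m" for j
  proof -
    have "B $$ (0,j) = cnj (B $$ (j,0))" by (rule hermitian_entry[OF hB]) (use Bc that in simp_all)
    thus ?thesis using Bi0[OF that] by simp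
  qed
  have lreal: "l = complex_of_real (Re l)"
    using B0j[of 0] Bi0[of 0] by (simp add: complex_eq_iff)
  define A3 where "A3 = mat m m (\<lambda>(i,j). B $$ (Suc i, Suc j))"
  have A3c: "A3 \<in> carrier_mat m m" unfolding A3_def by simp
  have hA3: "hermitian A3" unfolding hermitian_def
  proof -
    have hc: "cnj (B $$ (j,i)) = B $$ (i,j)" if "i < Suc m" "j < Suc m" for i j
      by (rule hermitian_entry[OF hB, symmetric]) (use Bc that in simp_all)
    show "mat_adjoint A3 = A3" by (rule eq_matI) (use hc in \<open>simp_all add: A3_def\<close>)
  qed
  obtain U3 d3 where U3: "unitary_mat m U3" and d3: "length d3 = m"
    and A3eq: "A3 = U3 * rdiag d3 * mat_adjoint U3"
    using Suc.IH[OF A3c hA3] by blast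
  note U3D = unitaryD[OF U3]
  have aU3: "mat_adjoint U3 \<in> carrier_mat m m" using U3D by simp
  have rd3: "rdiag d3 \<in> carrier_mat m m" using d3 rdiag_carrier[of d3] by simp
  have Bext: "B = ext1 m l A3"
    by (rule mat_eq_SucI[of _ m]) (use Bc Bi0 B0j in \<open>simp_all add: A3_def\<close>)
  define E where "E = ext1 m 1 U3"
  define R where "R = rdiag (Re l # d3)"
  have R: "R = ext1 m l (rdiag d3)" unfolding R_def using ext1_rdiag[OF d3, of "Re l"] lreal by simp
  have "E * R * mat_adjoint E = ext1 m l (U3 * rdiag d3 * mat_adjoint U3)"
    unfolding E_def R ext1_adj[OF U3D(1)]
    by (simp add: ext1_mult[OF U3D(1) rd3] ext1_mult[OF mult_carrier_nn[OF U3D(1) rd3] aU3])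
  hence BE: "B = E * R * mat_adjoint E" using Bext A3eq by simp
  have uE: "unitary_mat (Suc m) E" unfolding E_def by (rule ext1_unitary[OF U3])
  have Ec: "E \<in> carrier_mat (Suc m) (Suc m)" using unitaryD[OF uE] by simp
  have Rc: "R \<in> carrier_mat (Suc m) (Suc m)" unfolding R_def using d3 rdiag_carrier[of "Re l # d3"] by simp
  have AWB: "A = W * B * mat_adjoint W"
  proof -
    have "W * B * mat_adjoint W = (W * mat_adjoint W) * A * (W * mat_adjoint W)"
      unfolding B_def using W A aW by (simp add: mult_assoc_nn[of _ "Suc m"])
    thus ?thesis using WW2 A by simp
  qed
  have "A = (W * E) * R * mat_adjoint (W * E)"
    unfolding AWB BE adj_mult[OF W Ec] using W Ec Rc aW by (simp add: mult_assoc_nn[of _ "Suc m"])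
  moreover have "unitary_mat (Suc m) (W * E)" by (rule unitary_mult[OF uW uE])
  moreover have "length (Re l # d3) = Suc m" using d3 by simp
  ultimately show ?case unfolding R_def by blast
qed

lemma ip_sum: "x \<in> carrier_vec n \<Longrightarrow> ip x y = (\<Sum>i<n. cnj (x$i) * y$i)"
  unfolding ip_def by simp

lemma col_carrier[simp]: "U \<in> carrier_mat n m \<Longrightarrow> col U i \<in> carrier_vec n"
  by (rule carrier_vecI) (simp add: carrier_matD(1))

lemma mv2: "A \<in> carrier_mat n n \<Longrightarrow> B \<in> carrier_mat n n \<Longrightarrow> x \<in> carrier_vec n \<Longrightarrow>
  (A * B) *\<^sub>v x = A *\<^sub>v (B *\<^sub>v x)"
  by (rule assoc_mult_mat_vec)

lemma mv3: "A \<in> carrier_mat n n \<Longrightarrow> B \<in> carrier_mat n n \<Longrightarrow> C \<in> carrier_mat n n \<Longrightarrow> x \<in> carrier_vec n \<Longrightarrow>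
  (A * B * C) *\<^sub>v x = A *\<^sub>v (B *\<^sub>v (C *\<^sub>v x))"
  by (simp add: mv2)

lemma mult_unit_vec: assumes "(A::complex mat) \<in> carrier_mat n n" "i < n" shows "A *\<^sub>v unit_vec n i = col A i"
proof -
  have "A *\<^sub>v unit_vec n i = A *\<^sub>v col (1\<^sub>m n) i" using assms(2) by simp
  also have "\<dots> = col (A * 1\<^sub>m n) i" using assms by (subst col_mult2[of _ n n _ n]) simp_all
  also have "A * 1\<^sub>m n = A" by (rule right_mult_one_mat[OF assms(1)])
  finally show ?thesis .
qed

lemma rdiag_mult_vec': "length d = n \<Longrightarrow> x \<in> carrier_vec n \<Longrightarrow> i < n \<Longrightarrow> (rdiag d *\<^sub>v x) $ i = d!i * x$i"
  by (rule rdiag_mult_vec) simp_all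

definition psdm :: "nat \<Rightarrow> complex mat \<Rightarrow> bool" where
  "psdm n A \<longleftrightarrow> A \<in> carrier_mat n n \<and> hermitian A \<and> (\<forall>x\<in>carrier_vec n. 0 \<le> Re (ip x (A *\<^sub>v x)))"

lemma qf_decomp: assumes U: "unitary_mat n U" and d: "length d = n" and x: "x \<in> carrier_vec n"
  shows "ip x ((U * rdiag d * mat_adjoint U) *\<^sub>v x) = complex_of_real (\<Sum>i<n. d!i * (cmod ((mat_adjoint U *\<^sub>v x)$i))^2)"
proof -
  note UD = unitaryD[OF U]
  have R: "rdiag d \<in> carrier_mat n n" using d rdiag_carrier[of d] by simp
  have aU: "mat_adjoint U \<in> carrier_mat n n" using UD by simp
  define z where "z = mat_adjoint U *\<^sub>v x"
  have z: "z \<in> carrier_vec n" unfolding z_def using aU x by simp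
  have "(U * rdiag d * mat_adjoint U) *\<^sub>v x = U *\<^sub>v (rdiag d *\<^sub>v z)"
    unfolding z_def using UD(1) R aU x by (simp add: mv3)
  hence "ip x ((U * rdiag d * mat_adjoint U) *\<^sub>v x) = ip z (rdiag d *\<^sub>v z)"
    using ip_adj[OF UD(1) x, of "rdiag d *\<^sub>v z"] z R unfolding z_def by simp
  also have "\<dots> = (\<Sum>i<n. cnj (z$i) * (complex_of_real (d!i) * z$i))"
    using z d by (simp add: ip_sum[OF z] rdiag_mult_vec' del: index_mult_mat_vec)
  also have "\<dots> = (\<Sum>i<n. complex_of_real (d!i * (cmod (z$i))^2))"
  proof (rule sum.cong)
    fix i
    have "cnj (z$i) * (complex_of_real (d!i) * z$i) = complex_of_real (d!i) * (cnj (z$i) * z$i)"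
      by (simp only: mult_ac)
    thus "cnj (z$i) * (complex_of_real (d!i) * z$i) = complex_of_real (d!i * (cmod (z$i))^2)"
      by (simp only: cnj_mult_self of_real_mult)
  qed simp
  finally show ?thesis unfolding z_def of_real_sum .
qed

lemma adj_unit_col: assumes U: "unitary_mat n U" and i: "i < n"
  shows "mat_adjoint U *\<^sub>v col U i = unit_vec n i"
proof -
  note UD = unitaryD[OF U]
  have "mat_adjoint U *\<^sub>v col U i = col (mat_adjoint U * U) i"
    using UD(1) i by (simp add: col_mult2[of _ n n _ n])
  thus ?thesis using UD(3) i by simp
qed

lemma decomp_col_eigen: assumes U: "unitary_mat n U" and d: "length d = n" and i: "i < n"
  shows "(U * rdiag d * mat_adjoint U) *\<^sub>v col U i = complex_of_real (d!i) \<cdot>\<^sub>v col U i"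
proof -
  note UD = unitaryD[OF U]
  have R: "rdiag d \<in> carrier_mat n n" using d rdiag_carrier[of d] by simp
  have aU: "mat_adjoint U \<in> carrier_mat n n" using UD by simp
  have cU: "col U i \<in> carrier_vec n" using UD(1) by simp
  have "(U * rdiag d * mat_adjoint U) *\<^sub>v col U i = U *\<^sub>v (rdiag d *\<^sub>v (mat_adjoint U *\<^sub>v col U i))"
    using UD(1) R aU cU by (simp add: mv3)
  also have "rdiag d *\<^sub>v (mat_adjoint U *\<^sub>v col U i) = complex_of_real (d!i) \<cdot>\<^sub>v unit_vec n i"
    unfolding adj_unit_col[OF U i] by (rule eq_vecI) (use d i in simp_all)
  also have "U *\<^sub>v (complex_of_real (d!i) \<cdot>\<^sub>v unit_vec n i) = complex_of_real (d!i) \<cdot>\<^sub>v col U i"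
    using UD(1) i by (simp add: mult_mat_vec mult_unit_vec[OF UD(1) i])
  finally show ?thesis .
qed

lemma decomp_psd_nonneg: assumes U: "unitary_mat n U" and d: "length d = n" and i: "i < n"
  and psd: "\<forall>x\<in>carrier_vec n. 0 \<le> Re (ip x ((U * rdiag d * mat_adjoint U) *\<^sub>v x))"
  shows "d!i \<ge> 0"
proof -
  note UD = unitaryD[OF U]
  have cU: "col U i \<in> carrier_vec n" using UD(1) by simp
  have "ip (col U i) ((U * rdiag d * mat_adjoint U) *\<^sub>v col U i) = complex_of_real (d!i) * ip (col U i) (col U i)"
    unfolding decomp_col_eigen[OF U d i] by (rule ip_smult_right) simp
  also have "ip (col U i) (col U i) = 1"
    using adj_mult_index[OF UD(1) UD(1) i i] UD(3) i by simp
  finally show ?thesis using psd cU by force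
qed

lemma psdm_spectral: assumes "psdm n A"
  shows "\<exists>U d. unitary_mat n U \<and> length d = n \<and> (\<forall>i<n. d!i \<ge> 0) \<and> A = U * rdiag d * mat_adjoint U"
proof -
  have A: "A \<in> carrier_mat n n" "hermitian A" using assms unfolding psdm_def by auto
  obtain U d where U: "unitary_mat n U" "length d = n" "A = U * rdiag d * mat_adjoint U"
    using spectral[OF A] by blast
  have "\<forall>i<n. d!i \<ge> 0" using decomp_psd_nonneg[OF U(1,2)] assms U(3) unfolding psdm_def by blast
  thus ?thesis using U by blast
qed

lemma psdm_decomp: assumes "psdm n A"
  shows "psd_spec A (psd_decomp A)"
proof -
  have A: "A \<in> carrier_mat n n" using assms unfolding psdm_def by auto
  obtain U d where "unitary_mat n U \<and> length d = n \<and> (\<forall>i<n. d!i \<ge> 0) \<and> A = U * rdiag d * mat_adjoint U"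
    using psdm_spectral[OF assms] by blast
  moreover have dA: "dim_row A = n" using A by simp
  ultimately have "psd_spec A (U, d)" unfolding psd_spec_def Let_def fst_conv snd_conv dA by blast
  thus ?thesis unfolding psd_decomp_def by (rule someI)
qed

lemma psd_specD: assumes "psd_spec A (U, d)" "A \<in> carrier_mat n n"
  shows "unitary_mat n U" "length d = n" "\<forall>i<n. d!i \<ge> 0" "A = U * rdiag d * mat_adjoint U"
  using assms unfolding psd_spec_def Let_def by auto

lemma decomp_hermitian: assumes U: "unitary_mat n U" and d: "length d = n"
  shows "hermitian (U * rdiag d * mat_adjoint U)"
proof -
  note UD = unitaryD[OF U]
  have R: "rdiag d \<in> carrier_mat n n" using d rdiag_carrier[of d] by simp
  have aU: "mat_adjoint U \<in> carrier_mat n n" using UD by simp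
  have "mat_adjoint (U * rdiag d * mat_adjoint U) = mat_adjoint (mat_adjoint U) * mat_adjoint (U * rdiag d)"
    by (rule adj_mult[of _ n n _ n]) (use UD(1) R aU in simp_all)
  also have "mat_adjoint (U * rdiag d) = mat_adjoint (rdiag d) * mat_adjoint U"
    by (rule adj_mult[of _ n n _ n]) (use UD(1) R in simp_all)
  finally show ?thesis unfolding hermitian_def using UD(1) R aU by (simp add: mult_assoc_nn[of _ n])
qed

lemma decomp_psdm: assumes U: "unitary_mat n U" and d: "length d = n" and nn: "\<forall>i<n. d!i \<ge> 0"
  shows "psdm n (U * rdiag d * mat_adjoint U)"
proof -
  note UD = unitaryD[OF U]
  have R: "rdiag d \<in> carrier_mat n n" using d rdiag_carrier[of d] by simp
  have aU: "mat_adjoint U \<in> carrier_mat n n" using UD by simp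
  have "0 \<le> Re (ip x ((U * rdiag d * mat_adjoint U) *\<^sub>v x))" if x: "x \<in> carrier_vec n" for x
    unfolding qf_decomp[OF U d x] using nn by (auto intro!: sum_nonneg mult_nonneg_nonneg)
  moreover have "U * rdiag d * mat_adjoint U \<in> carrier_mat n n" using UD(1) R aU by simp
  ultimately show ?thesis unfolding psdm_def using decomp_hermitian[OF U d] by blast
qed

definition fpow :: "complex mat \<Rightarrow> complex mat \<times> real list \<Rightarrow> real \<Rightarrow> complex mat" where
  "fpow A ud r = fst ud * rdiag (map (\<lambda>x. rpow x r) (snd ud)) * mat_adjoint (fst ud)"

lemma psd_pow_alt: "psd_pow A r = fpow A (psd_decomp A) r"
  unfolding psd_pow_def fpow_def by (simp add: case_prod_beta)

lemma rpow_nonneg: "x \<ge> 0 \<Longrightarrow> rpow x r \<ge> 0"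
  unfolding rpow_def by simp

lemma psd_pow_psdm: assumes "psdm n A" shows "psdm n (psd_pow A r)"
proof -
  obtain U d where ud: "psd_decomp A = (U, d)" by (cases "psd_decomp A")
  have A: "A \<in> carrier_mat n n" using assms unfolding psdm_def by auto
  note D = psd_specD[OF psdm_decomp[OF assms, unfolded ud] A]
  show ?thesis unfolding psd_pow_alt fpow_def ud fst_conv snd_conv
    by (rule decomp_psdm[OF D(1)]) (use D(2,3) in \<open>simp_all add: rpow_nonneg\<close>)
qed

lemma eigen_fun: assumes U: "unitary_mat n U" and d: "length d = n"
  and u: "u \<in> carrier_vec n" and Au: "(U * rdiag d * mat_adjoint U) *\<^sub>v u = complex_of_real mu \<cdot>\<^sub>v u"
  shows "(U * rdiag (map f d) * mat_adjoint U) *\<^sub>v u = complex_of_real (f mu) \<cdot>\<^sub>v u"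
proof -
  note UD = unitaryD[OF U]
  have R: "rdiag d \<in> carrier_mat n n" using d rdiag_carrier[of d] by simp
  have Rf: "rdiag (map f d) \<in> carrier_mat n n" using d rdiag_carrier[of "map f d"] by simp
  have aU: "mat_adjoint U \<in> carrier_mat n n" using UD by simp
  define AA where "AA = U * rdiag d * mat_adjoint U"
  define z where "z = mat_adjoint U *\<^sub>v u"
  have z: "z \<in> carrier_vec n" unfolding z_def using aU u by simp
  have Rz: "rdiag d *\<^sub>v z \<in> carrier_vec n" using R z by simp
  have uz: "U *\<^sub>v z = u" unfolding z_def using mv2[OF UD(1) aU u] UD(2) u by simp
  have "AA *\<^sub>v u = U *\<^sub>v (rdiag d *\<^sub>v z)"
    unfolding AA_def z_def by (rule mv3[OF UD(1) R aU u])
  hence "mat_adjoint U *\<^sub>v (AA *\<^sub>v u) = (mat_adjoint U * U) *\<^sub>v (rdiag d *\<^sub>v z)"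
    using mv2[OF aU UD(1) Rz] by simp
  also have "\<dots> = rdiag d *\<^sub>v z" using UD(3) Rz by simp
  finally have "rdiag d *\<^sub>v z = mat_adjoint U *\<^sub>v (AA *\<^sub>v u)" by simp
  also have "\<dots> = complex_of_real mu \<cdot>\<^sub>v z"
    unfolding AA_def Au z_def using aU u by (simp add: mult_mat_vec)
  finally have eq: "rdiag d *\<^sub>v z = complex_of_real mu \<cdot>\<^sub>v z" .
  have comp: "complex_of_real (d!i) * z$i = complex_of_real mu * z$i" if "i < n" for i
    using arg_cong[OF eq, of "\<lambda>v. v $ i"] that z d by (simp add: rdiag_mult_vec' del: index_mult_mat_vec)
  have eqf: "rdiag (map f d) *\<^sub>v z = complex_of_real (f mu) \<cdot>\<^sub>v z"
  proof (rule eq_vecI)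
    fix i assume "i < dim_vec (complex_of_real (f mu) \<cdot>\<^sub>v z)"
    hence i: "i < n" using z by simp
    have l: "length (map f d) = n" using d by simp
    show "(rdiag (map f d) *\<^sub>v z) $ i = (complex_of_real (f mu) \<cdot>\<^sub>v z) $ i"
    proof (cases "z $ i = 0")
      case True thus ?thesis using i z d by (simp add: rdiag_mult_vec'[OF l] del: index_mult_mat_vec)
    next
      case False
      hence "d!i = mu" using comp[OF i] by simp
      thus ?thesis using i z d by (simp add: rdiag_mult_vec'[OF l] del: index_mult_mat_vec)
    qed
  qed (use z d in simp)
  have "(U * rdiag (map f d) * mat_adjoint U) *\<^sub>v u = U *\<^sub>v (rdiag (map f d) *\<^sub>v z)"
    unfolding z_def by (rule mv3[OF UD(1) Rf aU u])
  also have "\<dots> = complex_of_real (f mu) \<cdot>\<^sub>v u" unfolding eqf using UD(1) z uz by (simp add: mult_mat_vec)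
  finally show ?thesis .
qed

lemma psd_pow_eigen: assumes A: "psdm n A" and u: "u \<in> carrier_vec n"
  and Au: "A *\<^sub>v u = complex_of_real mu \<cdot>\<^sub>v u"
  shows "psd_pow A r *\<^sub>v u = complex_of_real (rpow mu r) \<cdot>\<^sub>v u"
proof -
  obtain U d where ud: "psd_decomp A = (U, d)" by (cases "psd_decomp A")
  have Ac: "A \<in> carrier_mat n n" using A unfolding psdm_def by auto
  note D = psd_specD[OF psdm_decomp[OF A, unfolded ud] Ac]
  show ?thesis unfolding psd_pow_alt fpow_def ud fst_conv snd_conv
    by (rule eigen_fun[OF D(1,2) u]) (use Au D(4) in simp)
qed

lemma psdm_AtA: assumes T: "T \<in> carrier_mat n n" shows "psdm n (mat_adjoint T * T)"
proof -
  have aT: "mat_adjoint T \<in> carrier_mat n n" using T by simp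
  have h: "hermitian (mat_adjoint T * T)" unfolding hermitian_def by (subst adj_mult[OF aT T]) simp
  have "0 \<le> Re (ip x ((mat_adjoint T * T) *\<^sub>v x))" if x: "x \<in> carrier_vec n" for x
  proof -
    have "ip x ((mat_adjoint T * T) *\<^sub>v x) = ip x (mat_adjoint T *\<^sub>v (T *\<^sub>v x))" using aT T x by (simp only: mv2)
    also have "\<dots> = ip (T *\<^sub>v x) (T *\<^sub>v x)" using ip_adj[OF aT x, of "T *\<^sub>v x"] T x by simp
    finally show ?thesis using ip_self_ge0 by simp
  qed
  moreover have "mat_adjoint T * T \<in> carrier_mat n n" using aT T by simp
  ultimately show ?thesis unfolding psdm_def using h by blast
qed

lemma psdm_add: assumes "psdm n A" "psdm n B" shows "psdm n (A + B)"
proof -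
  have A: "A \<in> carrier_mat n n" "hermitian A" and B: "B \<in> carrier_mat n n" "hermitian B"
    using assms unfolding psdm_def by auto
  have "mat_adjoint (A + B) = B + A" using adj_add[OF A(1) B(1)] A(2) B(2) unfolding hermitian_def by simp
  also have "\<dots> = A + B" by (rule comm_add_mat[OF B(1) A(1)])
  finally have h: "hermitian (A + B)" unfolding hermitian_def .
  have "0 \<le> Re (ip x ((A + B) *\<^sub>v x))" if x: "x \<in> carrier_vec n" for x
  proof -
    have "ip x ((A + B) *\<^sub>v x) = ip x (A *\<^sub>v x) + ip x (B *\<^sub>v x)"
      using A B x by (simp add: add_mult_distrib_mat_vec ip_add_right[of _ n])
    thus ?thesis using assms x unfolding psdm_def by simp
  qed
  thus ?thesis unfolding psdm_def using h A B by simp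
qed

lemma cs_real: assumes "finite A"
  shows "(\<Sum>i\<in>A. p i * q i)^2 \<le> (\<Sum>i\<in>A. (p i)^2) * (\<Sum>i\<in>A. (q i :: real)^2)"
proof -
  have e1: "(\<Sum>i\<in>A. \<Sum>j\<in>A. (p i)^2 * (q j)^2) = (\<Sum>i\<in>A. (p i)^2) * (\<Sum>i\<in>A. (q i)^2)"
    by (simp add: sum_product)
  have e2: "(\<Sum>i\<in>A. \<Sum>j\<in>A. (p j)^2 * (q i)^2) = (\<Sum>i\<in>A. (p i)^2) * (\<Sum>i\<in>A. (q i)^2)"
    by (subst sum.swap) (simp add: sum_product)
  have e3: "(\<Sum>i\<in>A. \<Sum>j\<in>A. (p i * q i) * (p j * q j)) = (\<Sum>i\<in>A. p i * q i)^2"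
    by (simp add: power2_eq_square sum_product)
  have "0 \<le> (\<Sum>i\<in>A. \<Sum>j\<in>A. (p i * q j - p j * q i)^2)" by (intro sum_nonneg) simp
  also have "\<dots> = (\<Sum>i\<in>A. \<Sum>j\<in>A. (p i)^2 * (q j)^2 + (p j)^2 * (q i)^2 - 2 * ((p i * q i) * (p j * q j)))"
    by (intro sum.cong refl) (simp add: power2_eq_square algebra_simps)
  also have "\<dots> = (\<Sum>i\<in>A. \<Sum>j\<in>A. (p i)^2 * (q j)^2) + (\<Sum>i\<in>A. \<Sum>j\<in>A. (p j)^2 * (q i)^2)
      - 2 * (\<Sum>i\<in>A. \<Sum>j\<in>A. (p i * q i) * (p j * q j))"
    by (simp add: sum.distrib sum_subtractf sum_distrib_left)
  finally show ?thesis unfolding e1 e2 e3 by simp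
qed

lemma adj_mv_index: assumes G: "G \<in> carrier_mat n n" and w: "w \<in> carrier_vec n" and i: "i < n"
  shows "(mat_adjoint G *\<^sub>v w) $ i = ip (col G i) w"
proof -
  have aG: "mat_adjoint G \<in> carrier_mat n n" using G by simp
  show ?thesis unfolding mult_mat_vec_sum[OF aG w i] ip_sum[OF col_carrier[OF G]]
    using G i by (intro sum.cong refl) simp
qed

lemma mat_cols_eigen: assumes A: "A \<in> carrier_mat n n" and Y: "Y \<in> carrier_mat n n" and la: "length a = n"
  and AY: "\<And>i. i < n \<Longrightarrow> A *\<^sub>v col Y i = complex_of_real (a!i) \<cdot>\<^sub>v col Y i"
  shows "A * Y = Y * rdiag a"
proof (rule eq_matI)
  fix k i assume "k < dim_row (Y * rdiag a)" "i < dim_col (Y * rdiag a)"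
  hence ki: "k < n" "i < n" using Y la by simp_all
  have "(A * Y) $$ (k,i) = (A *\<^sub>v col Y i) $ k" using A Y ki by simp
  also have "\<dots> = complex_of_real (a!i) * Y $$ (k,i)" unfolding AY[OF ki(2)] using Y ki by simp
  also have "\<dots> = (Y * rdiag a) $$ (k,i)" using mult_rdiag_index[of Y n a k i] Y la ki by simp
  finally show "(A * Y) $$ (k,i) = (Y * rdiag a) $$ (k,i)" .
qed (use A Y la in simp_all)

lemma herm_ip: assumes "hermitian M" "M \<in> carrier_mat n n" "v \<in> carrier_vec n" "w \<in> carrier_vec n"
  shows "ip v (M *\<^sub>v w) = ip (M *\<^sub>v v) w"
  using ip_adj[OF assms(2,3,4)] assms(1) unfolding hermitian_def by simp

lemma mixed_schwarz:
  fixes T Y N M :: "complex mat" and dd a b :: "real list"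
  assumes T: "T \<in> carrier_mat n n" and Y: "unitary_mat n Y"
    and ldd: "length dd = n" and TT: "mat_adjoint T * T = Y * rdiag dd * mat_adjoint Y"
    and N: "psdm n N" and NY: "\<And>i. i < n \<Longrightarrow> N *\<^sub>v col Y i = complex_of_real (a!i) \<cdot>\<^sub>v col Y i"
    and la: "length a = n" and a0: "\<And>i. i < n \<Longrightarrow> a!i \<ge> 0"
    and M: "psdm n M" and MG: "\<And>i. i < n \<Longrightarrow> M *\<^sub>v (T *\<^sub>v col Y i) = complex_of_real (b!i) \<cdot>\<^sub>v (T *\<^sub>v col Y i)"
    and lb: "length b = n" and b0: "\<And>i. i < n \<Longrightarrow> b!i \<ge> 0"
    and ab: "\<And>i. i < n \<Longrightarrow> dd!i > 0 \<Longrightarrow> a!i * b!i = dd!i"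
    and x: "x \<in> carrier_vec n" and w: "w \<in> carrier_vec n"
  shows "(cmod (ip w (T *\<^sub>v x)))^2 \<le> Re (ip x (N *\<^sub>v x)) * Re (ip w (M *\<^sub>v w))"
proof -
  note YD = unitaryD[OF Y]
  have aY: "mat_adjoint Y \<in> carrier_mat n n" using YD by simp
  have aT: "mat_adjoint T \<in> carrier_mat n n" using T by simp
  have Nc: "N \<in> carrier_mat n n" and hN: "hermitian N" using N unfolding psdm_def by auto
  have Mc: "M \<in> carrier_mat n n" and hM: "hermitian M" using M unfolding psdm_def by auto
  have Rdd: "rdiag dd \<in> carrier_mat n n" using ldd rdiag_carrier[of dd] by simp
  have Ra: "rdiag a \<in> carrier_mat n n" using la rdiag_carrier[of a] by simp
  have Rb: "rdiag b \<in> carrier_mat n n" using lb rdiag_carrier[of b] by simp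
  define G where "G = T * Y"
  have Gc: "G \<in> carrier_mat n n" unfolding G_def using T YD by simp
  have aG: "mat_adjoint G \<in> carrier_mat n n" using Gc by simp
  have colG: "col G i = T *\<^sub>v col Y i" if "i < n" for i
    unfolding G_def by (rule col_mult2[OF T YD(1) that])
  have ipY: "ip (col Y i) (col Y j) = (if i = j then 1 else 0)" if "i < n" "j < n" for i j
    using adj_mult_index[OF YD(1) YD(1) that] YD(3) that by simp
  have ipG: "ip (col G i) (col G j) = (if i = j then complex_of_real (dd!i) else 0)" if ij: "i < n" "j < n" for i j
  proof -
    have "ip (col G i) (col G j) = ip (T *\<^sub>v col Y i) (T *\<^sub>v col Y j)" using colG ij by simp
    also have "\<dots> = ip (col Y i) (mat_adjoint T *\<^sub>v (T *\<^sub>v col Y j))"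
      using ip_adj[OF aT col_carrier[OF YD(1)], of "T *\<^sub>v col Y j" i] T YD(1) by simp
    also have "mat_adjoint T *\<^sub>v (T *\<^sub>v col Y j) = (mat_adjoint T * T) *\<^sub>v col Y j"
      using mv2[OF aT T col_carrier[OF YD(1)]] by simp
    also have "\<dots> = complex_of_real (dd!j) \<cdot>\<^sub>v col Y j" unfolding TT by (rule decomp_col_eigen[OF Y ldd ij(2)])
    also have "ip (col Y i) (complex_of_real (dd!j) \<cdot>\<^sub>v col Y j) = complex_of_real (dd!j) * ip (col Y i) (col Y j)"
      by (rule ip_smult_right) (use YD(1) in simp)
    finally show ?thesis using ipY[OF ij] by simp
  qed
  have dd0: "dd!i \<ge> 0" if "i < n" for i
    using ipG[OF that that] ip_self_ge0[of "col G i"] by simp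
  have Gz: "col G i = 0\<^sub>v n" if "i < n" "dd!i = 0" for i
    using ipG[OF that(1) that(1)] that(2) ip_self_zero[OF col_carrier[OF Gc]] by simp
  have GG: "mat_adjoint G * G = rdiag dd"
  proof (rule eq_matI)
    fix i j assume "i < dim_row (rdiag dd)" "j < dim_col (rdiag dd)"
    hence ij: "i < n" "j < n" using ldd by simp_all
    show "(mat_adjoint G * G) $$ (i, j) = rdiag dd $$ (i, j)"
      unfolding adj_mult_index[OF Gc Gc ij] ipG[OF ij] using ij ldd by simp
  qed (use Gc ldd in simp_all)
  have NYeq: "N * Y = Y * rdiag a" by (rule mat_cols_eigen[OF Nc YD(1) la NY])
  have MGeq: "M * G = G * rdiag b" by (rule mat_cols_eigen[OF Mc Gc lb]) (simp add: colG MG)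
  define al where "al = mat_adjoint Y *\<^sub>v x"
  have al: "al \<in> carrier_vec n" unfolding al_def using aY x by simp
  have xal: "x = Y *\<^sub>v al" unfolding al_def using mv2[OF YD(1) aY x] YD(2) x by simp
  define be where "be = mat_adjoint G *\<^sub>v w"
  have be: "be \<in> carrier_vec n" unfolding be_def using aG w by simp
  have bei: "be $ i = ip (col G i) w" if "i < n" for i unfolding be_def by (rule adj_mv_index[OF Gc w that])
  have be0: "be $ i = 0" if "i < n" "dd!i = 0" for i using bei[OF that(1)] Gz[OF that] by simp
  have Tx: "T *\<^sub>v x = G *\<^sub>v al" unfolding xal G_def using mv2[OF T YD(1) al] by simp
  have lhs: "ip w (T *\<^sub>v x) = (\<Sum>i<n. cnj (be $ i) * al $ i)"
    unfolding Tx ip_adj[OF Gc w al] be_def[symmetric] ip_sum[OF be] ..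
  have Nx: "N *\<^sub>v x = Y *\<^sub>v (rdiag a *\<^sub>v al)"
    unfolding xal using mv2[OF Nc YD(1) al] mv2[OF YD(1) Ra al] NYeq by simp
  have qN: "ip x (N *\<^sub>v x) = complex_of_real (\<Sum>i<n. a!i * (cmod (al $ i))^2)"
  proof -
    have "ip x (N *\<^sub>v x) = ip al (rdiag a *\<^sub>v al)"
      unfolding Nx by (subst xal, rule unitary_ip[OF Y al]) (use Ra al in simp)
    also have "\<dots> = (\<Sum>i<n. complex_of_real (a!i * (cmod (al $ i))^2))"
      unfolding ip_sum[OF al]
    proof (rule sum.cong)
      fix i assume "i \<in> {..<n}"
      hence i: "i < n" by simp
      have "cnj (al $ i) * (rdiag a *\<^sub>v al) $ i = complex_of_real (a!i) * (cnj (al $ i) * al $ i)"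
        using rdiag_mult_vec'[OF la al i] i la by (simp add: mult_ac)
      thus "cnj (al $ i) * (rdiag a *\<^sub>v al) $ i = complex_of_real (a!i * (cmod (al $ i))^2)"
        by (simp only: cnj_mult_self of_real_mult)
    qed simp
    finally show ?thesis by (simp add: of_real_sum)
  qed
  (* Bessel *)
  define S where "S = (\<Sum>i<n. b!i * (cmod (be $ i))^2 / dd!i)"
  define ga where "ga = vec n (\<lambda>i. be $ i / complex_of_real (dd!i))"
  have ga: "ga \<in> carrier_vec n" unfolding ga_def by simp
  define v where "v = G *\<^sub>v ga"
  have v: "v \<in> carrier_vec n" unfolding v_def using Gc ga by simp
  have bga: "rdiag b *\<^sub>v ga \<in> carrier_vec n" using Rb ga by simp
  have Mv: "M *\<^sub>v v = G *\<^sub>v (rdiag b *\<^sub>v ga)"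
    unfolding v_def using mv2[OF Mc Gc ga] mv2[OF Gc Rb ga] MGeq by simp
  have trm: "complex_of_real (b!i) * (cnj (ga $ i) * be $ i) = complex_of_real (b!i * (cmod (be $ i))^2 / dd!i)"
    if "i < n" for i
  proof (cases "dd!i = 0")
    case True thus ?thesis using be0[OF that] that unfolding ga_def by simp
  next
    case False
    have "cnj (ga $ i) * be $ i = (cnj (be $ i) * be $ i) / complex_of_real (dd!i)"
      unfolding ga_def using that by simp
    also have "\<dots> = complex_of_real ((cmod (be $ i))^2 / dd!i)" by (simp add: cnj_mult_self)
    finally show ?thesis by simp
  qed
  have vMw: "ip v (M *\<^sub>v w) = complex_of_real S"
  proof -
    have "ip v (M *\<^sub>v w) = ip (M *\<^sub>v v) w" by (rule herm_ip[OF hM Mc v w])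
    also have "\<dots> = ip (rdiag b *\<^sub>v ga) be" unfolding Mv be_def using ip_adj[OF aG bga w] by simp
    also have "\<dots> = (\<Sum>i<n. complex_of_real (b!i) * (cnj (ga $ i) * be $ i))"
      unfolding ip_sum[OF bga] using rdiag_mult_vec'[OF lb ga] lb by (intro sum.cong refl) simp
    also have "\<dots> = complex_of_real S" unfolding S_def of_real_sum using trm by simp
    finally show ?thesis .
  qed
  have vMv: "ip v (M *\<^sub>v v) = complex_of_real S"
  proof -
    have "ip v (M *\<^sub>v v) = ip ga (mat_adjoint G *\<^sub>v (G *\<^sub>v (rdiag b *\<^sub>v ga)))"
      unfolding Mv using ip_adj[OF aG ga, of "G *\<^sub>v (rdiag b *\<^sub>v ga)"] Gc bga unfolding v_def by simp
    also have "mat_adjoint G *\<^sub>v (G *\<^sub>v (rdiag b *\<^sub>v ga)) = rdiag dd *\<^sub>v (rdiag b *\<^sub>v ga)"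
      using mv2[OF aG Gc bga] GG by simp
    also have "ip ga (rdiag dd *\<^sub>v (rdiag b *\<^sub>v ga)) = (\<Sum>i<n. complex_of_real (b!i) * (cnj (ga $ i) * be $ i))"
      unfolding ip_sum[OF ga]
    proof (rule sum.cong)
      fix i assume "i \<in> {..<n}"
      hence i: "i < n" by simp
      have "be $ i = complex_of_real (dd!i) * ga $ i"
      proof (cases "dd!i = 0")
        case True thus ?thesis using be0[OF i] i unfolding ga_def by simp
      next
        case False thus ?thesis using i unfolding ga_def by simp
      qed
      thus "cnj (ga $ i) * (rdiag dd *\<^sub>v (rdiag b *\<^sub>v ga)) $ i = complex_of_real (b!i) * (cnj (ga $ i) * be $ i)"
        using rdiag_mult_vec'[OF ldd bga i] rdiag_mult_vec'[OF lb ga i] i lb ldd by (simp add: mult_ac)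
    qed simp
    also have "\<dots> = complex_of_real S" unfolding S_def of_real_sum using trm by simp
    finally show ?thesis .
  qed
  have wMv: "ip w (M *\<^sub>v v) = complex_of_real S"
  proof -
    have "ip w (M *\<^sub>v v) = cnj (ip (M *\<^sub>v v) w)" using ip_cnj[of "M *\<^sub>v v" w] Mc v w by simp
    also have "ip (M *\<^sub>v v) w = ip v (M *\<^sub>v w)" by (rule herm_ip[OF hM Mc v w, symmetric])
    finally show ?thesis using vMw by simp
  qed
  have Mwv: "M *\<^sub>v (w - v) = M *\<^sub>v w - M *\<^sub>v v" using Mc w v by (simp add: mult_minus_distrib_mat_vec)
  have "ip (w - v) (M *\<^sub>v (w - v)) = ip w (M *\<^sub>v w) - ip w (M *\<^sub>v v) - (ip v (M *\<^sub>v w) - ip v (M *\<^sub>v v))"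
    unfolding Mwv using Mc w v by (simp add: ip_minus_left[of _ n] ip_minus_right[of _ n])
  also have "\<dots> = ip w (M *\<^sub>v w) - complex_of_real S" unfolding wMv vMw vMv by simp
  finally have eqwv: "ip (w - v) (M *\<^sub>v (w - v)) = ip w (M *\<^sub>v w) - complex_of_real S" .
  have wv: "w - v \<in> carrier_vec n" using w v by simp
  have "0 \<le> Re (ip (w - v) (M *\<^sub>v (w - v)))" using M wv unfolding psdm_def by blast
  hence "0 \<le> Re (ip w (M *\<^sub>v w)) - S" unfolding eqwv by simp
  hence SM: "S \<le> Re (ip w (M *\<^sub>v w))" by simp
  define p where "p i = sqrt (a!i) * cmod (al $ i)" for i
  define q where "q i = sqrt (b!i / dd!i) * cmod (be $ i)" for i
  have pq: "cmod (be $ i) * cmod (al $ i) = p i * q i" if i: "i < n" for i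
  proof (cases "dd!i = 0")
    case True thus ?thesis using be0[OF i] unfolding p_def q_def by simp
  next
    case False
    hence "dd!i > 0" using dd0[OF i] by simp
    hence "sqrt (a!i) * sqrt (b!i / dd!i) = 1" using ab[OF i] by (simp add: real_sqrt_mult[symmetric])
    thus ?thesis unfolding p_def q_def by (metis mult.commute mult.left_commute mult.right_neutral)
  qed
  have p2: "(\<Sum>i<n. (p i)^2) = Re (ip x (N *\<^sub>v x))"
    unfolding qN p_def using a0 by (simp add: power_mult_distrib)
  have q2: "(\<Sum>i<n. (q i)^2) = S"
    unfolding S_def q_def
  proof (rule sum.cong)
    fix i assume "i \<in> {..<n}"
    hence i: "i < n" by simp
    have "b!i / dd!i \<ge> 0" using b0[OF i] dd0[OF i] by simp
    thus "(sqrt (b!i / dd!i) * cmod (be $ i))^2 = b!i * (cmod (be $ i))^2 / dd!i"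
      by (simp add: power_mult_distrib)
  qed simp
  have "cmod (ip w (T *\<^sub>v x)) \<le> (\<Sum>i<n. cmod (cnj (be $ i) * al $ i))"
    unfolding lhs by (rule norm_sum)
  also have "\<dots> = (\<Sum>i<n. p i * q i)" by (intro sum.cong refl) (simp add: norm_mult pq)
  finally have le1: "cmod (ip w (T *\<^sub>v x)) \<le> (\<Sum>i<n. p i * q i)" .
  have "(cmod (ip w (T *\<^sub>v x)))^2 \<le> (\<Sum>i<n. p i * q i)^2"
    by (rule power_mono[OF le1]) simp
  also have "\<dots> \<le> (\<Sum>i<n. (p i)^2) * (\<Sum>i<n. (q i)^2)" by (rule cs_real) simp
  also have "\<dots> \<le> Re (ip x (N *\<^sub>v x)) * Re (ip w (M *\<^sub>v w))"
    unfolding p2 q2 by (rule mult_left_mono[OF SM]) (use N x in \<open>simp add: psdm_def\<close>)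
  finally show ?thesis .
qed

lemma kernel_exists_zero_row: assumes C: "(C :: complex mat) \<in> carrier_mat n n" and i0: "i0 < n"
  and row0: "\<And>c. c < n \<Longrightarrow> C $$ (i0, c) = 0"
  shows "\<exists>a. a \<in> carrier_vec n \<and> a \<noteq> 0\<^sub>v n \<and> C *\<^sub>v a = 0\<^sub>v n"
proof -
  have Ct: "transpose_mat C \<in> carrier_mat n n" using C by simp
  have "transpose_mat C *\<^sub>v unit_vec n i0 = col (transpose_mat C) i0" by (rule mult_unit_vec[OF Ct i0])
  also have "\<dots> = row C i0" using C i0 by simp
  also have "\<dots> = 0\<^sub>v n" by (rule eq_vecI) (use C row0 i0 in simp_all)
  finally have "det (transpose_mat C) = 0"
    using det_0_iff_vec_prod_zero_field[OF Ct] i0 by (metis unit_vec_carrier unit_vec_nonzero)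
  hence "det C = 0" using det_transpose[OF C] by simp
  thus ?thesis using det_0_iff_vec_prod_zero_field[OF C] by blast
qed

lemma weyl_count:
  assumes U: "unitary_mat n U" and ld: "length d = n" and V: "unitary_mat n V" and le: "length e = n"
  and ord: "\<And>x. x \<in> carrier_vec n \<Longrightarrow> Re (ip x ((U * rdiag d * mat_adjoint U) *\<^sub>v x)) \<le> Re (ip x ((V * rdiag e * mat_adjoint V) *\<^sub>v x))"
  shows "card {i. i < n \<and> d!i \<ge> mu} \<le> card {j. j < n \<and> e!j \<ge> mu}"
proof (rule ccontr)
  define I where "I = {i. i < n \<and> d!i \<ge> mu}"
  define J where "J = {j. j < n \<and> e!j \<ge> mu}"
  assume "\<not> card {i. i < n \<and> d!i \<ge> mu} \<le> card {j. j < n \<and> e!j \<ge> mu}"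
  hence lt: "card J < card I" unfolding I_def J_def by simp
  have fI: "finite I" and fJ: "finite J" unfolding I_def J_def by auto
  have IJn: "I \<subseteq> {..<n}" "J \<subseteq> {..<n}" unfolding I_def J_def by auto
  from lt have "I \<noteq> {}" by auto
  then obtain i0 where i0: "i0 \<in> I" by blast
  have "card J \<le> card (I - {i0})" using lt i0 fI by simp
  then obtain g where g: "g ` J \<subseteq> I - {i0}" "inj_on g J" using card_le_inj[OF fJ] fI by blast
  note UD = unitaryD[OF U] and VD = unitaryD[OF V]
  have aU: "mat_adjoint U \<in> carrier_mat n n" and aV: "mat_adjoint V \<in> carrier_mat n n" using UD VD by simp_all
  define P where "P = mat_adjoint V * U"
  have Pc: "P \<in> carrier_mat n n" unfolding P_def using aV UD by simp
  define C where "C = mat n n (\<lambda>(r,c). if r \<notin> I then (if c = r then 1 else 0)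
      else if r \<in> g ` J then P $$ (the_inv_into J g r, c) else 0)"
  have Cc: "C \<in> carrier_mat n n" unfolding C_def by simp
  have i0n: "i0 < n" using i0 unfolding I_def by simp
  obtain a where a: "a \<in> carrier_vec n" "a \<noteq> 0\<^sub>v n" and Ca: "C *\<^sub>v a = 0\<^sub>v n"
  proof -
    have ng: "i0 \<notin> g ` J" using g(1) by blast
    have "C $$ (i0, c) = 0" if "c < n" for c using that i0 i0n ng unfolding C_def by simp
    thus ?thesis using kernel_exists_zero_row[OF Cc i0n] that by blast
  qed
  have Cai: "(C *\<^sub>v a) $ r = 0" if "r < n" for r using Ca that by simp
  have a_out: "a $ r = 0" if r: "r < n" "r \<notin> I" for r
  proof -
    have "(C *\<^sub>v a) $ r = (\<Sum>c<n. C $$ (r,c) * a $ c)" by (rule mult_mat_vec_sum[OF Cc a(1) r(1)])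
    also have "\<dots> = C $$ (r,r) * a $ r" by (rule sum_single_nz) (use r in \<open>simp_all add: C_def\<close>)
    also have "\<dots> = a $ r" using r unfolding C_def by simp
    finally show ?thesis using Cai[OF r(1)] by simp
  qed
  define b where "b = P *\<^sub>v a"
  have b: "b \<in> carrier_vec n" unfolding b_def using Pc a by simp
  have b_in: "b $ j = 0" if j: "j \<in> J" for j
  proof -
    have jn: "j < n" using j unfolding J_def by simp
    have gj: "g j \<in> I" "g j < n" using g(1) j IJn by auto
    have inv: "the_inv_into J g (g j) = j" by (rule the_inv_into_f_f[OF g(2) j])
    have "(C *\<^sub>v a) $ g j = (\<Sum>c<n. C $$ (g j,c) * a $ c)" by (rule mult_mat_vec_sum[OF Cc a(1) gj(2)])
    also have "\<dots> = (\<Sum>c<n. P $$ (j,c) * a $ c)" using gj j inv unfolding C_def by (intro sum.cong refl) simp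
    also have "\<dots> = b $ j" unfolding b_def by (rule mult_mat_vec_sum[OF Pc a(1) jn, symmetric])
    finally show ?thesis using Cai[OF gj(2)] by simp
  qed
  define x where "x = U *\<^sub>v a"
  have x: "x \<in> carrier_vec n" unfolding x_def using UD a by simp
  have aUx: "mat_adjoint U *\<^sub>v x = a" unfolding x_def using mv2[OF aU UD(1) a(1)] UD(3) a by simp
  have aVx: "mat_adjoint V *\<^sub>v x = b" unfolding x_def b_def P_def using mv2[OF aV UD(1) a(1)] by simp
  define K where "K = (\<Sum>i<n. (cmod (a $ i))^2)"
  have Ka: "ip a a = complex_of_real K" unfolding K_def ip_self using a by simp
  have Kb: "ip b b = complex_of_real K"
  proof -
    have "ip b b = ip x x" unfolding aVx[symmetric] by (rule unitary_ip[OF unitary_adj[OF V], simplified]) (use x in simp_all)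
    also have "\<dots> = ip a a" unfolding x_def by (rule unitary_ip[OF U a(1) a(1)])
    finally show ?thesis using Ka by simp
  qed
  have Kpos: "K > 0"
  proof -
    have "K \<ge> 0" unfolding K_def by (simp add: sum_nonneg)
    moreover have "K \<noteq> 0" using ip_self_zero[OF a(1)] a(2) Ka by auto
    ultimately show ?thesis by simp
  qed
  have qA: "Re (ip x ((U * rdiag d * mat_adjoint U) *\<^sub>v x)) \<ge> mu * K"
  proof -
    have "Re (ip x ((U * rdiag d * mat_adjoint U) *\<^sub>v x)) = (\<Sum>i<n. d!i * (cmod (a $ i))^2)"
      unfolding qf_decomp[OF U ld x] aUx by simp
    also have "\<dots> \<ge> (\<Sum>i<n. mu * (cmod (a $ i))^2)"
    proof (rule sum_mono)
      fix i assume "i \<in> {..<n}"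
      hence i: "i < n" by simp
      show "mu * (cmod (a $ i))^2 \<le> d!i * (cmod (a $ i))^2"
      proof (cases "i \<in> I")
        case True thus ?thesis unfolding I_def by (simp add: mult_right_mono)
      next
        case False thus ?thesis using a_out[OF i] by simp
      qed
    qed
    finally show ?thesis unfolding K_def by (simp add: sum_distrib_left)
  qed
  have qB: "Re (ip x ((V * rdiag e * mat_adjoint V) *\<^sub>v x)) < mu * K"
  proof -
    have e: "ip b b = complex_of_real (\<Sum>j<n. (cmod (b $ j))^2)" using ip_self[of b] carrier_vecD[OF b] by simp
    have Kb': "K = (\<Sum>j<n. (cmod (b $ j))^2)" using e Kb by (metis of_real_eq_iff)
    have "b \<noteq> 0\<^sub>v n" using Kb Kpos by auto
    then obtain j0 where j0: "j0 < n" "b $ j0 \<noteq> 0" using b by (metis eq_vecI carrier_vecD index_zero_vec)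
    have j0J: "j0 \<notin> J" using b_in j0 by auto
    have "0 < (\<Sum>j<n. (mu - e!j) * (cmod (b $ j))^2)"
    proof (rule sum_pos2[of _ j0])
      show "0 < (mu - e!j0) * (cmod (b $ j0))^2" using j0 j0J unfolding J_def by simp
    next
      fix j assume "j \<in> {..<n}"
      thus "0 \<le> (mu - e!j) * (cmod (b $ j))^2" using b_in unfolding J_def by (cases "j \<in> J") (auto simp: J_def)
    qed (use j0 in simp_all)
    hence "(\<Sum>j<n. e!j * (cmod (b $ j))^2) < mu * K"
      unfolding Kb' by (simp add: sum_distrib_left left_diff_distrib sum_subtractf)
    thus ?thesis unfolding qf_decomp[OF V le x] aVx by simp
  qed
  show False using ord[OF x] qA qB by simp
qed

abbreviation rs :: "real list \<Rightarrow> real list" where "rs l \<equiv> rev (sort l)"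

lemma rs_desc: assumes "i \<le> j" "j < length l" shows "rs l ! j \<le> rs l ! i"
proof -
  have "rs l ! j = sort l ! (length l - Suc j)" using assms by (simp add: rev_nth)
  also have "\<dots> \<le> sort l ! (length l - Suc i)" by (rule sorted_nth_mono) (use assms in simp_all)
  also have "\<dots> = rs l ! i" using assms by (simp add: rev_nth)
  finally show ?thesis .
qed

lemma cnt_perm: "mset l1 = mset l2 \<Longrightarrow> length (filter P l1) = length (filter P l2)"
  by (metis mset_filter size_mset)

lemma cnt_card: "length l = n \<Longrightarrow> card {i. i < n \<and> P (l!i)} = length (filter P l)"
  by (simp add: length_filter_conv_card)

lemma count_to_sorted:
  assumes ld: "length d = n" and le: "length e = n"
    and cnt: "\<And>mu. card {i. i < n \<and> d!i \<ge> mu} \<le> card {j. j < n \<and> e!j \<ge> mu}"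
    and k: "k < n"
  shows "rs d ! k \<le> rs e ! k"
proof (rule ccontr)
  assume "\<not> rs d ! k \<le> rs e ! k"
  hence lt: "rs e ! k < rs d ! k" by simp
  define mu where "mu = rs d ! k"
  have c1: "card {i. i < n \<and> d!i \<ge> mu} = card {i. i < n \<and> rs d!i \<ge> mu}"
    using cnt_card[OF ld, of "\<lambda>x. x \<ge> mu"] cnt_card[of "rs d" n "\<lambda>x. x \<ge> mu"] ld
      cnt_perm[of d "rs d" "\<lambda>x. x \<ge> mu"] by simp
  have c2: "card {j. j < n \<and> e!j \<ge> mu} = card {j. j < n \<and> rs e!j \<ge> mu}"
    using cnt_card[OF le, of "\<lambda>x. x \<ge> mu"] cnt_card[of "rs e" n "\<lambda>x. x \<ge> mu"] le
      cnt_perm[of e "rs e" "\<lambda>x. x \<ge> mu"] by simp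
  have "{..k} \<subseteq> {i. i < n \<and> rs d!i \<ge> mu}"
    using k ld rs_desc[of _ k d] unfolding mu_def by auto
  hence "card {..k} \<le> card {i. i < n \<and> rs d!i \<ge> mu}" by (rule card_mono[rotated]) simp
  hence A: "Suc k \<le> card {i. i < n \<and> rs d!i \<ge> mu}" by simp
  have "{j. j < n \<and> rs e!j \<ge> mu} \<subseteq> {..<k}"
  proof
    fix j assume j: "j \<in> {j. j < n \<and> rs e!j \<ge> mu}"
    show "j \<in> {..<k}"
    proof (rule ccontr)
      assume "j \<notin> {..<k}"
      hence "k \<le> j" by simp
      hence "rs e ! j \<le> rs e ! k" using rs_desc[of k j e] j le by simp
      thus False using j lt unfolding mu_def by simp
    qed
  qed
  hence "card {j. j < n \<and> rs e!j \<ge> mu} \<le> k" using card_mono[of "{..<k}"] by fastforce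
  thus False using A cnt[of mu] c1 c2 by simp
qed

lemma weyl_sorted:
  assumes U: "unitary_mat n U" and ld: "length d = n" and V: "unitary_mat n V" and le: "length e = n"
  and ord: "\<And>x. x \<in> carrier_vec n \<Longrightarrow> Re (ip x ((U * rdiag d * mat_adjoint U) *\<^sub>v x)) \<le> Re (ip x ((V * rdiag e * mat_adjoint V) *\<^sub>v x))"
  and k: "k < n"
  shows "rs d ! k \<le> rs e ! k"
  by (rule count_to_sorted[OF ld le _ k]) (rule weyl_count[OF U ld V le ord])

lemma spec_unique:
  assumes U: "unitary_mat n U" and ld: "length d = n" and V: "unitary_mat n V" and le: "length e = n"
  and eq: "U * rdiag d * mat_adjoint U = V * rdiag e * mat_adjoint V"
  shows "mset d = mset e"
proof -
  have "rs d = rs e"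
  proof (rule nth_equalityI)
    show "length (rs d) = length (rs e)" using ld le by simp
    fix k assume "k < length (rs d)"
    hence k: "k < n" using ld by simp
    show "rs d ! k = rs e ! k"
      using weyl_sorted[OF U ld V le _ k] weyl_sorted[OF V le U ld _ k] eq by force
  qed
  hence "sort d = sort e" by simp
  thus ?thesis by (metis mset_sort)
qed

lemma psd_spec_unique: assumes "psd_spec A (U, d)" "psd_spec A (V, e)" "A \<in> carrier_mat n n"
  shows "mset d = mset e"
proof -
  note D1 = psd_specD[OF assms(1,3)] and D2 = psd_specD[OF assms(2,3)]
  show ?thesis by (rule spec_unique[OF D1(1,2) D2(1,2)]) (use D1(4) D2(4) in simp)
qed

lemma rpow_half: "x \<ge> 0 \<Longrightarrow> rpow x (1/2) = sqrt x"
  unfolding rpow_def by (simp add: powr_half_sqrt)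

lemma mat_abs_decomp: assumes X: "X \<in> carrier_mat n n" and ud: "psd_decomp (mat_adjoint X * X) = (U, D)"
  shows "psd_spec (mat_adjoint X * X) (U, D)" "unitary_mat n U" "length D = n" "\<forall>i<n. D!i \<ge> 0"
    "mat_adjoint X * X = U * rdiag D * mat_adjoint U"
    "mat_abs X = U * rdiag (map sqrt D) * mat_adjoint U"
proof -
  have P: "psdm n (mat_adjoint X * X)" by (rule psdm_AtA[OF X])
  show S: "psd_spec (mat_adjoint X * X) (U, D)" using psdm_decomp[OF P] ud by simp
  have Xc: "mat_adjoint X * X \<in> carrier_mat n n" using X by simp
  note D = psd_specD[OF S Xc]
  show "unitary_mat n U" "length D = n" "\<forall>i<n. D!i \<ge> 0" "mat_adjoint X * X = U * rdiag D * mat_adjoint U"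
    using D by auto
  have mp: "map (\<lambda>x. rpow x (1/2)) D = map sqrt D"
    using D(2,3) by (intro map_cong refl) (auto simp: rpow_half in_set_conv_nth)
  show "mat_abs X = U * rdiag (map sqrt D) * mat_adjoint U"
    unfolding mat_abs_def psd_pow_alt fpow_def ud fst_conv snd_conv by (simp only: mp)
qed

lemma sv_mset: assumes X: "X \<in> carrier_mat n n"
  shows "mset (singular_values X) = mset (map sqrt (snd (psd_decomp (mat_adjoint X * X))))"
proof -
  obtain U D where ud: "psd_decomp (mat_adjoint X * X) = (U, D)" by (cases "psd_decomp (mat_adjoint X * X)")
  note M = mat_abs_decomp[OF X ud]
  have sD: "\<forall>i<n. map sqrt D ! i \<ge> 0" using M(3,4) by simp
  have lD: "length (map sqrt D) = n" using M(3) by simp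
  have P: "psdm n (mat_abs X)" unfolding M(6) by (rule decomp_psdm[OF M(2) lD sD])
  have Ac: "mat_abs X \<in> carrier_mat n n" using P unfolding psdm_def by simp
  obtain U2 D2 where ud2: "psd_decomp (mat_abs X) = (U2, D2)" by (cases "psd_decomp (mat_abs X)")
  have S2: "psd_spec (mat_abs X) (U2, D2)" using psdm_decomp[OF P] ud2 by simp
  have dA: "dim_row (mat_abs X) = n" using Ac by simp
  have S1: "psd_spec (mat_abs X) (U, map sqrt D)"
    unfolding psd_spec_def Let_def fst_conv snd_conv dA using M(2) lD sD M(6) by blast
  have "mset D2 = mset (map sqrt D)" by (rule psd_spec_unique[OF S2 S1 Ac])
  thus ?thesis unfolding singular_values_def psd_eigenvalues_def ud2 ud by simp
qed

lemma spec_parts: assumes "psdm n A" "psd_decomp A = (V, E)"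
  shows "unitary_mat n V" "length E = n" "\<forall>i<n. E!i \<ge> 0" "A = V * rdiag E * mat_adjoint V"
proof -
  have Ac: "A \<in> carrier_mat n n" using assms(1) unfolding psdm_def by simp
  note D = psd_specD[OF psdm_decomp[OF assms(1), unfolded assms(2)] Ac]
  show "unitary_mat n V" "length E = n" "\<forall>i<n. E!i \<ge> 0" "A = V * rdiag E * mat_adjoint V" using D by auto
qed

lemma sv_psd: assumes P: "psdm n A"
  shows "mset (singular_values A) = mset (snd (psd_decomp A))"
proof -
  obtain V E where ve: "psd_decomp A = (V, E)" by (cases "psd_decomp A")
  note D = spec_parts[OF P ve]
  note VD = unitaryD[OF D(1)]
  have Ac: "A \<in> carrier_mat n n" and hA: "hermitian A" using P unfolding psdm_def by auto
  have R: "rdiag E \<in> carrier_mat n n" using D(2) rdiag_carrier[of E] by simp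
  have aV: "mat_adjoint V \<in> carrier_mat n n" using VD by simp
  have "mat_adjoint A * A = A * A" using hA unfolding hermitian_def by simp
  also have "A * A = V * rdiag E * (mat_adjoint V * V * (rdiag E * mat_adjoint V))"
    unfolding D(4) using VD(1) R aV by (simp add: mult_assoc_nn[of _ n])
  also have "\<dots> = V * rdiag E * (1\<^sub>m n * (rdiag E * mat_adjoint V))" by (simp only: VD(3))
  also have "1\<^sub>m n * (rdiag E * mat_adjoint V) = rdiag E * mat_adjoint V"
    by (rule left_mult_one_mat[of _ n n]) (use R aV in simp)
  also have "V * rdiag E * (rdiag E * mat_adjoint V) = V * (rdiag E * rdiag E) * mat_adjoint V"
    using VD(1) R aV by (simp add: mult_assoc_nn[of _ n])
  also have "rdiag E * rdiag E = rdiag (map (\<lambda>x. x * x) E)"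
    using rdiag_mult_rdiag[of "\<lambda>x. x" E "\<lambda>x. x"] by simp
  finally have AA: "mat_adjoint A * A = V * rdiag (map (\<lambda>x. x * x) E) * mat_adjoint V" .
  obtain U D1 where ud: "psd_decomp (mat_adjoint A * A) = (U, D1)" by (cases "psd_decomp (mat_adjoint A * A)")
  note M = mat_abs_decomp[OF Ac ud]
  have "mset D1 = mset (map (\<lambda>x. x * x) E)"
    by (rule spec_unique[OF M(2,3) D(1)]) (use D(2) M(5) AA in simp_all)
  hence "mset (map sqrt D1) = mset (map sqrt (map (\<lambda>x. x * x) E))" unfolding mset_map by simp
  also have "map sqrt (map (\<lambda>x. x * x) E) = E"
  proof -
    have "\<forall>x\<in>set E. sqrt (x * x) = x" using D(2,3) by (auto simp: in_set_conv_nth)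
    thus ?thesis by (induct E) auto
  qed
  finally show ?thesis using sv_mset[OF Ac] ud ve by simp
qed

lemma length_sv: assumes X: "X \<in> carrier_mat n n" shows "length (singular_values X) = n"
proof -
  obtain U D where ud: "psd_decomp (mat_adjoint X * X) = (U, D)" by (cases "psd_decomp (mat_adjoint X * X)")
  note M = mat_abs_decomp[OF X ud]
  have "length (singular_values X) = length (map sqrt D)"
    using arg_cong[OF sv_mset[OF X], of size] ud by simp
  thus ?thesis using M(3) by simp
qed

lemma opnorm_props: assumes P: "psdm n A" and n: "n > 0" and ve: "psd_decomp A = (V, E)"
  shows "op_norm A \<in> set E" "\<And>i. i < n \<Longrightarrow> E!i \<le> op_norm A"
proof -
  note D = spec_parts[OF P ve]
  define L where "L = singular_values A"
  have mL: "mset L = mset E" unfolding L_def using sv_psd[OF P] ve by simp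
  have sL: "set L = set E" using arg_cong[OF mL, of set_mset] by simp
  have lL: "length L = n" using arg_cong[OF mL, of size] D(2) by simp
  have Lrs: "L = rs (psd_eigenvalues (mat_abs A))" unfolding L_def singular_values_def ..
  have lL': "length (psd_eigenvalues (mat_abs A)) = n" using lL Lrs by simp
  have Lne: "L \<noteq> []" using lL n by auto
  have op: "op_norm A = L ! 0" unfolding op_norm_def L_def[symmetric] using hd_conv_nth[OF Lne] .
  show "op_norm A \<in> set E" unfolding op sL[symmetric] using lL n by simp
  fix i assume i: "i < n"
  have "E!i \<in> set L" using sL i D(2) by simp
  then obtain k where k: "k < n" "L ! k = E!i" using lL in_set_conv_nth[of "E!i" L] by auto
  have "L ! k \<le> L ! 0" unfolding Lrs by (rule rs_desc) (use k lL' in simp_all)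
  thus "E!i \<le> op_norm A" using k op by simp
qed

lemma opnorm_nonneg: assumes P: "psdm n A" and n: "n > 0" shows "op_norm A \<ge> 0"
proof -
  obtain V E where ve: "psd_decomp A = (V, E)" by (cases "psd_decomp A")
  note D = spec_parts[OF P ve]
  have "op_norm A \<in> set E" by (rule opnorm_props(1)[OF P n ve])
  thus ?thesis using D(2,3) by (auto simp: in_set_conv_nth)
qed

lemma quad_le_opnorm: assumes P: "psdm n A" and n: "n > 0" and w: "w \<in> carrier_vec n"
  shows "Re (ip w (A *\<^sub>v w)) \<le> op_norm A * Re (ip w w)"
proof -
  obtain V E where ve: "psd_decomp A = (V, E)" by (cases "psd_decomp A")
  note D = spec_parts[OF P ve]
  note VD = unitaryD[OF D(1)]
  define z where "z = mat_adjoint V *\<^sub>v w"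
  have aV: "mat_adjoint V \<in> carrier_mat n n" using VD by simp
  have z: "z \<in> carrier_vec n" unfolding z_def using mult_mat_vec_carrier[OF aV w] .
  have "Re (ip w (A *\<^sub>v w)) = (\<Sum>i<n. E!i * (cmod (z $ i))^2)"
    unfolding z_def by (subst D(4)) (simp add: qf_decomp[OF D(1,2) w])
  also have "\<dots> \<le> (\<Sum>i<n. op_norm A * (cmod (z $ i))^2)"
    by (rule sum_mono) (simp add: mult_right_mono opnorm_props(2)[OF P n ve])
  also have "\<dots> = op_norm A * Re (ip z z)" unfolding ip_self using z by (simp add: sum_distrib_left)
  also have "ip z z = ip w w" unfolding z_def by (rule unitary_ip[OF unitary_adj[OF D(1)], simplified]) (use w in simp_all)
  finally show ?thesis .
qed

lemma psdm_mat_abs: "X \<in> carrier_mat n n \<Longrightarrow> psdm n (mat_abs X)"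
  unfolding mat_abs_def by (rule psd_pow_psdm[OF psdm_AtA])

lemma cs2: assumes "a \<ge> 0" "b \<ge> 0" "c \<ge> 0" "(d::real) \<ge> 0"
  shows "(sqrt a * sqrt b + sqrt c * sqrt d)^2 \<le> (a + c) * (b + d)"
proof -
  define A B C D where "A = sqrt a" "B = sqrt b" "C = sqrt c" "D = sqrt d"
  have e: "a = A^2" "b = B^2" "c = C^2" "d = D^2" unfolding A_B_C_D_def using assms by simp_all
  have "(a + c) * (b + d) - (A * B + C * D)^2 = (A * D - C * B)^2"
    unfolding e by (simp add: power2_eq_square algebra_simps)
  moreover have "0 \<le> (A * D - C * B)^2" by simp
  ultimately have "(A * B + C * D)^2 \<le> (a + c) * (b + d)" by linarith
  thus ?thesis unfolding A_B_C_D_def .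
qed

lemma sum_list_as_mset: "sum_list (map f xs) = sum_mset (image_mset f (mset xs))"
proof -
  have "sum_list (map f xs) = sum_mset (mset (map f xs))" by (rule sum_mset_sum_list[symmetric])
  thus ?thesis by (simp only: mset_map)
qed

lemma sum_list_mset_eq: assumes "mset xs = mset ys" shows "sum_list (map f xs) = sum_list (map (f :: _ \<Rightarrow> real) ys)"
  using sum_list_as_mset[of f xs] sum_list_as_mset[of f ys] assms by simp

lemma rpow_pos: "s > 0 \<Longrightarrow> rpow s r = s powr r"
  unfolding rpow_def by simp

lemma eigen_chain: assumes T: "T \<in> carrier_mat n n" and ud: "psd_decomp (mat_adjoint T * T) = (Y, dd)"
  and i: "i < n"
  shows "psd_pow (mat_abs T) r *\<^sub>v col Y i = complex_of_real (rpow (rpow (dd!i) (1/2)) r) \<cdot>\<^sub>v col Y i"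
    "psd_pow (mat_abs (mat_adjoint T)) r *\<^sub>v (T *\<^sub>v col Y i) = complex_of_real (rpow (rpow (dd!i) (1/2)) r) \<cdot>\<^sub>v (T *\<^sub>v col Y i)"
proof -
  note M = mat_abs_decomp[OF T ud]
  note YD = unitaryD[OF M(2)]
  have aT: "mat_adjoint T \<in> carrier_mat n n" using T by simp
  have y: "col Y i \<in> carrier_vec n" using YD(1) by simp
  have e1: "(mat_adjoint T * T) *\<^sub>v col Y i = complex_of_real (dd!i) \<cdot>\<^sub>v col Y i"
    unfolding M(5) by (rule decomp_col_eigen[OF M(2,3) i])
  have e2: "mat_abs T *\<^sub>v col Y i = complex_of_real (rpow (dd!i) (1/2)) \<cdot>\<^sub>v col Y i"
    unfolding mat_abs_def by (rule psd_pow_eigen[OF psdm_AtA[OF T] y e1])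
  show "psd_pow (mat_abs T) r *\<^sub>v col Y i = complex_of_real (rpow (rpow (dd!i) (1/2)) r) \<cdot>\<^sub>v col Y i"
    by (rule psd_pow_eigen[OF psdm_mat_abs[OF T] y e2])
  have u: "T *\<^sub>v col Y i \<in> carrier_vec n" using T y by simp
  have "(T * mat_adjoint T) *\<^sub>v (T *\<^sub>v col Y i) = T *\<^sub>v ((mat_adjoint T * T) *\<^sub>v col Y i)"
    using mv2[OF T aT u] mv2[OF aT T y] by simp
  also have "\<dots> = complex_of_real (dd!i) \<cdot>\<^sub>v (T *\<^sub>v col Y i)" unfolding e1 using T y by (simp add: mult_mat_vec)
  finally have e3: "(mat_adjoint (mat_adjoint T) * mat_adjoint T) *\<^sub>v (T *\<^sub>v col Y i) = complex_of_real (dd!i) \<cdot>\<^sub>v (T *\<^sub>v col Y i)"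
    by simp
  have e4: "mat_abs (mat_adjoint T) *\<^sub>v (T *\<^sub>v col Y i) = complex_of_real (rpow (dd!i) (1/2)) \<cdot>\<^sub>v (T *\<^sub>v col Y i)"
    unfolding mat_abs_def by (rule psd_pow_eigen[OF psdm_AtA[OF aT] u e3])
  show "psd_pow (mat_abs (mat_adjoint T)) r *\<^sub>v (T *\<^sub>v col Y i) = complex_of_real (rpow (rpow (dd!i) (1/2)) r) \<cdot>\<^sub>v (T *\<^sub>v col Y i)"
    by (rule psd_pow_eigen[OF psdm_mat_abs[OF aT] u e4])
qed

lemma mixed_T: assumes T: "T \<in> carrier_mat n n" and x: "x \<in> carrier_vec n" and w: "w \<in> carrier_vec n"
  shows "(cmod (ip w (T *\<^sub>v x)))^2 \<le> Re (ip x (psd_pow (mat_abs T) (2*(1-t)) *\<^sub>v x))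
     * Re (ip w (psd_pow (mat_abs (mat_adjoint T)) (2*t) *\<^sub>v w))"
proof -
  obtain Y dd where ud: "psd_decomp (mat_adjoint T * T) = (Y, dd)" by (cases "psd_decomp (mat_adjoint T * T)")
  note M = mat_abs_decomp[OF T ud]
  have aT: "mat_adjoint T \<in> carrier_mat n n" using T by simp
  define a where "a = map (\<lambda>d. rpow (rpow d (1/2)) (2*(1-t))) dd"
  define b where "b = map (\<lambda>d. rpow (rpow d (1/2)) (2*t)) dd"
  have la: "length a = n" and lb: "length b = n" unfolding a_def b_def using M(3) by simp_all
  have ai: "a!i = rpow (rpow (dd!i) (1/2)) (2*(1-t))" if "i < n" for i unfolding a_def using that M(3) by simp
  have bi: "b!i = rpow (rpow (dd!i) (1/2)) (2*t)" if "i < n" for i unfolding b_def using that M(3) by simp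
  have dd0: "dd!i \<ge> 0" if "i < n" for i using M(4) that by simp
  show ?thesis
  proof (rule mixed_schwarz[OF T M(2,3,5) _ _ la _ _ _ lb _ _ x w])
    show "psdm n (psd_pow (mat_abs T) (2 * (1 - t)))" by (rule psd_pow_psdm[OF psdm_mat_abs[OF T]])
    show "psdm n (psd_pow (mat_abs (mat_adjoint T)) (2 * t))" by (rule psd_pow_psdm[OF psdm_mat_abs[OF aT]])
    fix i assume i: "i < n"
    show "psd_pow (mat_abs T) (2 * (1 - t)) *\<^sub>v col Y i = complex_of_real (a ! i) \<cdot>\<^sub>v col Y i"
      unfolding ai[OF i] by (rule eigen_chain(1)[OF T ud i])
    show "psd_pow (mat_abs (mat_adjoint T)) (2 * t) *\<^sub>v (T *\<^sub>v col Y i) = complex_of_real (b ! i) \<cdot>\<^sub>v (T *\<^sub>v col Y i)"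
      unfolding bi[OF i] by (rule eigen_chain(2)[OF T ud i])
    show "0 \<le> a ! i" unfolding ai[OF i] using dd0[OF i] by (intro rpow_nonneg) (simp add: rpow_half)
    show "0 \<le> b ! i" unfolding bi[OF i] using dd0[OF i] by (intro rpow_nonneg) (simp add: rpow_half)
    assume pos: "0 < dd ! i"
    define s where "s = sqrt (dd!i)"
    have s: "s > 0" unfolding s_def using pos by simp
    have rs: "rpow (dd!i) (1/2) = s" unfolding s_def using pos by (simp add: rpow_half)
    have "a ! i * b ! i = s powr (2*(1-t)) * s powr (2*t)" unfolding ai[OF i] bi[OF i] rs using s by (simp add: rpow_pos)
    also have "\<dots> = s powr (real 2)" by (simp add: powr_add[symmetric] algebra_simps)
    also have "\<dots> = s ^ 2" using s by (rule powr_realpow)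
    also have "\<dots> = dd!i" unfolding s_def using pos by simp
    finally show "a ! i * b ! i = dd ! i" .
  qed
qed

lemma sum_list_nth: "sum_list (map f xs) = (\<Sum>k<length xs. f (xs ! k))"
  by (simp add: sum_list_sum_nth atLeast0LessThan)

lemma vec_ineq:
  assumes T: "T \<in> carrier_mat n n" and S: "S \<in> carrier_mat n n" and n: "n > 0" and x: "x \<in> carrier_vec n"
  shows "Re (ip ((T + S) *\<^sub>v x) ((T + S) *\<^sub>v x)) \<le>
    op_norm (psd_pow (mat_abs (mat_adjoint T)) (2*t) + psd_pow (mat_abs (mat_adjoint S)) (2*r))
    * Re (ip x ((psd_pow (mat_abs T) (2*(1-t)) + psd_pow (mat_abs S) (2*(1-r))) *\<^sub>v x))"
proof -
  define MT where "MT = psd_pow (mat_abs (mat_adjoint T)) (2*t)"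
  define MS where "MS = psd_pow (mat_abs (mat_adjoint S)) (2*r)"
  define NT where "NT = psd_pow (mat_abs T) (2*(1-t))"
  define NS where "NS = psd_pow (mat_abs S) (2*(1-r))"
  have aT: "mat_adjoint T \<in> carrier_mat n n" and aS: "mat_adjoint S \<in> carrier_mat n n" using T S by simp_all
  have pMT: "psdm n MT" unfolding MT_def by (rule psd_pow_psdm[OF psdm_mat_abs[OF aT]])
  have pMS: "psdm n MS" unfolding MS_def by (rule psd_pow_psdm[OF psdm_mat_abs[OF aS]])
  have pNT: "psdm n NT" unfolding NT_def by (rule psd_pow_psdm[OF psdm_mat_abs[OF T]])
  have pNS: "psdm n NS" unfolding NS_def by (rule psd_pow_psdm[OF psdm_mat_abs[OF S]])
  have MTc: "MT \<in> carrier_mat n n" and MSc: "MS \<in> carrier_mat n n" and NTc: "NT \<in> carrier_mat n n"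
    and NSc: "NS \<in> carrier_mat n n" using pMT pMS pNT pNS unfolding psdm_def by simp_all
  define c where "c = op_norm (MT + MS)"
  have pM: "psdm n (MT + MS)" by (rule psdm_add[OF pMT pMS])
  have c0: "c \<ge> 0" unfolding c_def by (rule opnorm_nonneg[OF pM n])
  define w where "w = (T + S) *\<^sub>v x"
  have TS: "T + S \<in> carrier_mat n n" using T S by simp
  have w: "w \<in> carrier_vec n" unfolding w_def by (rule mult_mat_vec_carrier[OF TS x])
  have Tx: "T *\<^sub>v x \<in> carrier_vec n" and Sx: "S *\<^sub>v x \<in> carrier_vec n" using T S x by simp_all
  define W where "W = Re (ip w w)"
  have W0: "W \<ge> 0" unfolding W_def by (rule ip_self_ge0)
  define nT where "nT = Re (ip x (NT *\<^sub>v x))"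
  define nS where "nS = Re (ip x (NS *\<^sub>v x))"
  define mT where "mT = Re (ip w (MT *\<^sub>v w))"
  define mS where "mS = Re (ip w (MS *\<^sub>v w))"
  have nT0: "nT \<ge> 0" unfolding nT_def using pNT x unfolding psdm_def by blast
  have nS0: "nS \<ge> 0" unfolding nS_def using pNS x unfolding psdm_def by blast
  have mT0: "mT \<ge> 0" unfolding mT_def using pMT w unfolding psdm_def by blast
  have mS0: "mS \<ge> 0" unfolding mS_def using pMS w unfolding psdm_def by blast
  have hT: "(cmod (ip w (T *\<^sub>v x)))^2 \<le> nT * mT"
    unfolding nT_def mT_def NT_def MT_def by (rule mixed_T[OF T x w])
  have hS: "(cmod (ip w (S *\<^sub>v x)))^2 \<le> nS * mS"
    unfolding nS_def mS_def NS_def MS_def by (rule mixed_T[OF S x w])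
  have hT': "cmod (ip w (T *\<^sub>v x)) \<le> sqrt nT * sqrt mT"
    using real_sqrt_le_mono[OF hT] by (simp add: real_sqrt_mult)
  have hS': "cmod (ip w (S *\<^sub>v x)) \<le> sqrt nS * sqrt mS"
    using real_sqrt_le_mono[OF hS] by (simp add: real_sqrt_mult)
  have wsum: "(T + S) *\<^sub>v x = T *\<^sub>v x + S *\<^sub>v x" by (rule add_mult_distrib_mat_vec[OF T S x])
  have "ip w w = ip w ((T + S) *\<^sub>v x)" unfolding w_def ..
  also have "\<dots> = ip w (T *\<^sub>v x + S *\<^sub>v x)" unfolding wsum ..
  also have "\<dots> = ip w (T *\<^sub>v x) + ip w (S *\<^sub>v x)" by (rule ip_add_right[OF w Tx Sx])
  finally have "ip w w = ip w (T *\<^sub>v x) + ip w (S *\<^sub>v x)" .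
  hence "W \<le> cmod (ip w (T *\<^sub>v x)) + cmod (ip w (S *\<^sub>v x))"
    unfolding W_def using complex_Re_le_cmod[of "ip w (T *\<^sub>v x)"] complex_Re_le_cmod[of "ip w (S *\<^sub>v x)"] by simp
  also have "\<dots> \<le> sqrt nT * sqrt mT + sqrt nS * sqrt mS" using hT' hS' by simp
  finally have W1: "W \<le> sqrt nT * sqrt mT + sqrt nS * sqrt mS" .
  have "W^2 \<le> (sqrt nT * sqrt mT + sqrt nS * sqrt mS)^2" by (rule power_mono[OF W1 W0])
  also have "\<dots> \<le> (nT + nS) * (mT + mS)" by (rule cs2[OF nT0 mT0 nS0 mS0])
  finally have W2: "W^2 \<le> (nT + nS) * (mT + mS)" .
  have nsum: "nT + nS = Re (ip x ((NT + NS) *\<^sub>v x))"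
    unfolding nT_def nS_def using NTc NSc x by (simp add: add_mult_distrib_mat_vec ip_add_right[of _ n])
  have msum: "mT + mS = Re (ip w ((MT + MS) *\<^sub>v w))"
    unfolding mT_def mS_def using MTc MSc w by (simp add: add_mult_distrib_mat_vec ip_add_right[of _ n])
  have mle: "mT + mS \<le> c * W" unfolding msum c_def W_def by (rule quad_le_opnorm[OF pM n w])
  have n0: "nT + nS \<ge> 0" using nT0 nS0 by simp
  have "W^2 \<le> (nT + nS) * (c * W)" using W2 mult_left_mono[OF mle n0] by simp
  hence "W \<le> c * (nT + nS)"
  proof (cases "W = 0")
    case True thus ?thesis using c0 n0 by simp
  next
    case False
    hence Wp: "W > 0" using W0 by simp
    have "W * W \<le> (c * (nT + nS)) * W" using \<open>W^2 \<le> (nT + nS) * (c * W)\<close> by (simp add: power2_eq_square mult_ac)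
    thus ?thesis using Wp by simp
  qed
  thus ?thesis unfolding W_def w_def nsum c_def MT_def MS_def NT_def NS_def .
qed

lemma main_gen:
  assumes T: "T \<in> carrier_mat n n" and S: "S \<in> carrier_mat n n" and p: "p > 0"
  shows "schatten_norm p (T + S) \<le>
    op_norm (psd_pow (mat_abs (mat_adjoint T)) (2*t) + psd_pow (mat_abs (mat_adjoint S)) (2*r)) powr (1/2)
    * schatten_norm (p/2) (psd_pow (mat_abs T) (2*(1-t)) + psd_pow (mat_abs S) (2*(1-r))) powr (1/2)"
proof -
  define M where "M = psd_pow (mat_abs (mat_adjoint T)) (2*t) + psd_pow (mat_abs (mat_adjoint S)) (2*r)"
  define N where "N = psd_pow (mat_abs T) (2*(1-t)) + psd_pow (mat_abs S) (2*(1-r))"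
  define X where "X = T + S"
  have X: "X \<in> carrier_mat n n" unfolding X_def using T S by simp
  have aT: "mat_adjoint T \<in> carrier_mat n n" and aS: "mat_adjoint S \<in> carrier_mat n n" using T S by simp_all
  have pM: "psdm n M" unfolding M_def
    by (rule psdm_add; rule psd_pow_psdm[OF psdm_mat_abs]) (use aT aS in simp_all)
  have pN: "psdm n N" unfolding N_def
    by (rule psdm_add; rule psd_pow_psdm[OF psdm_mat_abs]) (use T S in simp_all)
  have Nc: "N \<in> carrier_mat n n" using pN unfolding psdm_def by simp
  show ?thesis
  proof (cases "n = 0")
    case True
    have "singular_values X = []" using length_sv[OF X] True by simp
    hence l: "schatten_norm p X = 0" unfolding schatten_norm_def by simp
    have "singular_values N = []" using length_sv[OF Nc] True by simp
    hence "schatten_norm (p/2) N = 0" unfolding schatten_norm_def by simp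
    thus ?thesis using l unfolding M_def[symmetric] N_def[symmetric] X_def[symmetric] by simp
  next
    case False
    hence n: "n > 0" by simp
    define c where "c = op_norm M"
    have c0: "c \<ge> 0" unfolding c_def by (rule opnorm_nonneg[OF pM n])
    obtain U1 D1 where ud1: "psd_decomp (mat_adjoint X * X) = (U1, D1)" by (cases "psd_decomp (mat_adjoint X * X)")
    note M1 = mat_abs_decomp[OF X ud1]
    obtain V E where ve: "psd_decomp N = (V, E)" by (cases "psd_decomp N")
    note NE = spec_parts[OF pN ve]
    define cE where "cE = map (\<lambda>y. c * y) E"
    have lcE: "length cE = n" unfolding cE_def using NE(2) by simp
    have aX: "mat_adjoint X \<in> carrier_mat n n" using X by simp
    have ord: "Re (ip x ((U1 * rdiag D1 * mat_adjoint U1) *\<^sub>v x)) \<le> Re (ip x ((V * rdiag cE * mat_adjoint V) *\<^sub>v x))"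
      if x: "x \<in> carrier_vec n" for x
    proof -
      have Xx: "X *\<^sub>v x \<in> carrier_vec n" using X x by simp
      have "ip x ((U1 * rdiag D1 * mat_adjoint U1) *\<^sub>v x) = ip x (mat_adjoint X *\<^sub>v (X *\<^sub>v x))"
        unfolding M1(5)[symmetric] using mv2[OF aX X x] by simp
      also have "\<dots> = ip (X *\<^sub>v x) (X *\<^sub>v x)" using ip_adj[OF aX x Xx] by simp
      finally have l: "ip x ((U1 * rdiag D1 * mat_adjoint U1) *\<^sub>v x) = ip (X *\<^sub>v x) (X *\<^sub>v x)" .
      have "Re (ip x ((V * rdiag cE * mat_adjoint V) *\<^sub>v x)) = (\<Sum>i<n. c * E!i * (cmod ((mat_adjoint V *\<^sub>v x)$i))^2)"
        unfolding qf_decomp[OF NE(1) lcE x] unfolding cE_def using NE(2) by simp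
      also have "\<dots> = c * Re (ip x (N *\<^sub>v x))"
        by (subst NE(4), subst qf_decomp[OF NE(1,2) x]) (simp add: sum_distrib_left mult.assoc)
      finally have r: "Re (ip x ((V * rdiag cE * mat_adjoint V) *\<^sub>v x)) = c * Re (ip x (N *\<^sub>v x))" .
      show ?thesis unfolding l r X_def c_def M_def N_def by (rule vec_ineq[OF T S n x[unfolded X_def]])
    qed
    have weyl: "rs D1 ! k \<le> rs cE ! k" if k: "k < n" for k
      by (rule weyl_sorted[OF M1(2,3) NE(1) lcE ord k])
    have D1nn: "y \<ge> 0" if "y \<in> set D1" for y using that M1(3,4) by (auto simp: in_set_conv_nth)
    have Enn: "y \<ge> 0" if "y \<in> set E" for y using that NE(2,3) by (auto simp: in_set_conv_nth)
    define K where "K = sum_list (map (\<lambda>y. y powr (p/2)) E)"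
    have K0: "K \<ge> 0" unfolding K_def by (rule sum_list_nonneg) auto
    have sX: "sum_list (map (\<lambda>s. s powr p) (singular_values X)) = sum_list (map (\<lambda>s. s powr p) (map sqrt D1))"
      by (rule sum_list_mset_eq) (use sv_mset[OF X] ud1 in simp)
    also have "\<dots> = sum_list (map (\<lambda>d. d powr (p/2)) D1)"
    proof -
      have "map (\<lambda>s. s powr p) (map sqrt D1) = map (\<lambda>d. d powr (p/2)) D1"
        unfolding map_map
      proof (rule map_cong[OF refl])
        fix d assume "d \<in> set D1"
        hence d: "d \<ge> 0" by (rule D1nn)
        have "((\<lambda>s. s powr p) \<circ> sqrt) d = (d powr (1/2)) powr p" using d by (simp add: powr_half_sqrt)
        also have "\<dots> = d powr (p/2)" by (simp add: powr_powr)
        finally show "((\<lambda>s. s powr p) \<circ> sqrt) d = d powr (p/2)" .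
      qed
      thus ?thesis by (rule arg_cong[where f = sum_list])
    qed
    also have "\<dots> = sum_list (map (\<lambda>d. d powr (p/2)) (rs D1))" by (rule sum_list_mset_eq) simp
    also have "\<dots> = (\<Sum>k<n. (rs D1 ! k) powr (p/2))" unfolding sum_list_nth using M1(3) by simp
    also have "\<dots> \<le> (\<Sum>k<n. (rs cE ! k) powr (p/2))"
    proof (rule sum_mono)
      fix k assume "k \<in> {..<n}"
      hence k: "k < n" by simp
      have "rs D1 ! k \<in> set D1" using nth_mem[of k "rs D1"] k M1(3) by simp
      hence "rs D1 ! k \<ge> 0" by (rule D1nn)
      thus "(rs D1 ! k) powr (p/2) \<le> (rs cE ! k) powr (p/2)"
        using weyl[OF k] p by (intro powr_mono2) simp_all
    qed
    also have "\<dots> = sum_list (map (\<lambda>d. d powr (p/2)) (rs cE))" unfolding sum_list_nth using lcE by simp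
    also have "\<dots> = sum_list (map (\<lambda>d. d powr (p/2)) cE)" by (rule sum_list_mset_eq) simp
    also have "\<dots> = c powr (p/2) * K"
    proof -
      have "map (\<lambda>d. d powr (p/2)) cE = map (\<lambda>y. c powr (p/2) * y powr (p/2)) E"
        unfolding cE_def map_map
      proof (rule map_cong[OF refl])
        fix y assume "y \<in> set E"
        hence "y \<ge> 0" by (rule Enn)
        thus "((\<lambda>d. d powr (p/2)) \<circ> (\<lambda>y. c * y)) y = c powr (p/2) * y powr (p/2)"
          using c0 by (simp add: powr_mult)
      qed
      thus ?thesis unfolding K_def by (simp add: sum_list_const_mult)
    qed
    finally have S1: "sum_list (map (\<lambda>s. s powr p) (singular_values X)) \<le> c powr (p/2) * K" .
    have S1nn: "0 \<le> sum_list (map (\<lambda>s. s powr p) (singular_values X))" by (rule sum_list_nonneg) auto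
    have sN: "sum_list (map (\<lambda>s. s powr (p/2)) (singular_values N)) = K"
      unfolding K_def by (rule sum_list_mset_eq) (use sv_psd[OF pN] ve in simp)
    have e1: "p/2 * (1/p) = 1/2" using p by (simp add: field_simps)
    have e2: "1/(p/2) * (1/2) = 1/p" using p by (simp add: field_simps)
    have "schatten_norm p X = (sum_list (map (\<lambda>s. s powr p) (singular_values X))) powr (1/p)"
      unfolding schatten_norm_def ..
    also have "\<dots> \<le> (c powr (p/2) * K) powr (1/p)" by (rule powr_mono2) (use p S1nn S1 in simp_all)
    also have "\<dots> = c powr (1/2) * K powr (1/p)" using c0 K0 p by (simp add: powr_mult powr_powr e1)
    also have "K powr (1/p) = (K powr (1/(p/2))) powr (1/2)" by (simp only: powr_powr e2)
    also have "K powr (1/(p/2)) = schatten_norm (p/2) N" unfolding schatten_norm_def sN ..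
    finally show ?thesis unfolding X_def c_def M_def N_def .
  qed
qed

theorem corollary4p3:
  fixes T S :: "complex mat" and n :: nat and p t :: real
  assumes "T \<in> carrier_mat n n" and "S \<in> carrier_mat n n"
    and "p > 0" and "0 \<le> t" and "t \<le> 1"
  shows "(schatten_norm p (T + S) \<le>
           op_norm (psd_pow (mat_abs (mat_adjoint T)) (2 * t) + psd_pow (mat_abs (mat_adjoint S)) (2 * t)) powr (1/2)
         * schatten_norm (p / 2) (psd_pow (mat_abs T) (2 * (1 - t)) + psd_pow (mat_abs S) (2 * (1 - t))) powr (1/2)) \<and>
         (schatten_norm p (T + S) \<le>
           op_norm (psd_pow (mat_abs (mat_adjoint T)) (2 * t) + psd_pow (mat_abs (mat_adjoint S)) (2 * (1 - t))) powr (1/2)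
         * schatten_norm (p / 2) (psd_pow (mat_abs T) (2 * (1 - t)) + psd_pow (mat_abs S) (2 * t)) powr (1/2))"
  proof -
  have 1: "schatten_norm p (T + S) \<le>
           op_norm (psd_pow (mat_abs (mat_adjoint T)) (2 * t) + psd_pow (mat_abs (mat_adjoint S)) (2 * t)) powr (1/2)
         * schatten_norm (p / 2) (psd_pow (mat_abs T) (2 * (1 - t)) + psd_pow (mat_abs S) (2 * (1 - t))) powr (1/2)"
    by (rule main_gen[OF assms(1,2,3)])
  have 2: "schatten_norm p (T + S) \<le>
           op_norm (psd_pow (mat_abs (mat_adjoint T)) (2 * t) + psd_pow (mat_abs (mat_adjoint S)) (2 * (1 - t))) powr (1/2)
         * schatten_norm (p / 2) (psd_pow (mat_abs T) (2 * (1 - t)) + psd_pow (mat_abs S) (2 * (1 - (1 - t)))) powr (1/2)"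
    by (rule main_gen[OF assms(1,2,3)])
  have e: "1 - (1 - t) = t" by simp
  show ?thesis using 1 2 unfolding e by blast
qed

end
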